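(* The gauge-invariant subregion algebra satisfies $$\widetilde{\mathcal A}_r:=\Pi_{GI}\mathcal A_r\Pi_{GI}=\hat{\mathcal A}_r^\Pi\,\Pi_{GI}=\{\hat{\mathcal O}\Pi_{GI}:\hat{\mathcal O}\in\hat{\mathcal A}_r,\ [\hat{\mathcal O},\Pi_{GI}]=0\}.$$
   Context: Setup. Let $G$ be a compact Lie group (possibly finite) with normalized Haar measure $dg$ ($\int dg=1$). Let $\Lambda=(V,E)$ be a finite directed graph; loops and multiple edges are allowed. Each edge $e$ carries $\mathcal H_e=L^2(G)$ with unitaries $L_e(g)|h\rangle_e=|gh\rangle_e$ and $R_e(g^{-1})|h\rangle_e=|hg^{-1}\rangle_e$. Each vertex $v$ carries a Hilbert space $\mathcal H_v$ with a unitary representation $U_v$ of $G$. All these spaces are taken finite-dimensional by truncating to finitely many irreducible isotypic sectors, which are invariant under the group actions. The pre-gauged space is $\mathcal H=\bigotimes_v\mathcal H_v\otimes\bigotimes_e\mathcal H_e$. The gauge transformation at $v$ is $A_v(g)=U_v(g)\prod_{e\in E^-(v)}L_e(g)\prod_{e\in E^+(v)}R_e(g^{-1})$, where $E^-(v)$ is the set of edges oriented out of $v$ and $E^+(v)$ the set of edges oriented into $v$. Set $\Pi_v=\int dg\,A_v(g)$; these are mutually commuting orthogonal projections. Set $\Pi_{GI}=\prod_v\Pi_v$. Subregions. A subregion $r$ is an arbitrary subset of $V\cup E$, and $\bar r$ is its complement. Let $\mathcal H_r=\bigotimes_{x\in r}\mathcal H_x$ and $\mathcal A_r=\mathcal B(\mathcal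 H_r)\otimes 1_{\bar r}$. Let $V_r$ be the set of vertices $v$ such that $v$ and all edges incident to $v$ lie in $r$, and put $\Pi_{V_r}=\prod_{v\in V_r}\Pi_v$. Define $\hat{\mathcal A}_r=\{\Pi_{V_r}\mathcal O\Pi_{V_r}:\mathcal O\in\mathcal A_r\}$. *)

theory Defs
  imports "HOL-Probability.Probability" "HOL-Algebra.Group" "Graph_Theory.Digraph"
begin

text \<open>Finite-dimensional Hilbert spaces and their tensor products are modelled in
  coordinates. A site x (a vertex or an edge) carries C^(d x) with standard basis
  indexed by 0..<d x. The tensor product over a set S of sites has the orthonormal
  basis of configurations (PiE S (lessThan o d)); operators are matrices indexed by
  configurations, extended by zero outside.\<close>

type_synonym 'x cfg = "'x \<Rightarrow> nat"
type_synonym 'x op = "'x cfg \<Rightarrow> 'x cfg \<Rightarrow> complex"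
type_synonym cmat = "nat \<Rightarrow> nat \<Rightarrow> complex"

definition cfgs :: "('x \<Rightarrow> nat) \<Rightarrow> 'x set \<Rightarrow> 'x cfg set" where
  "cfgs d S = (\<Pi>\<^sub>E x\<in>S. {..<d x})"

definition opmul :: "'x cfg set \<Rightarrow> 'x op \<Rightarrow> 'x op \<Rightarrow> 'x op" where
  "opmul C A B = (\<lambda>\<sigma> \<tau>. if \<sigma> \<in> C \<and> \<tau> \<in> C then (\<Sum>\<rho>\<in>C. A \<sigma> \<rho> * B \<rho> \<tau>) else 0)"

definition opid :: "'x cfg set \<Rightarrow> 'x op" where
  "opid C = (\<lambda>\<sigma> \<tau>. if \<sigma> \<in> C \<and> \<sigma> = \<tau> then 1 else 0)"

text \<open>Ordered product of a finite family of operators (used for commuting families).\<close>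
definition opprod :: "'x cfg set \<Rightarrow> ('i \<Rightarrow> 'x op) \<Rightarrow> 'i set \<Rightarrow> 'x op" where
  "opprod C P I = Finite_Set.fold (\<lambda>i acc. opmul C (P i) acc) (opid C) I"

definition matmul :: "nat \<Rightarrow> cmat \<Rightarrow> cmat \<Rightarrow> cmat" where
  "matmul n A B = (\<lambda>i j. \<Sum>k<n. A i k * B k j)"

definition idm :: cmat where
  "idm = (\<lambda>i j. if i = j then 1 else 0)"

definition unitary_rep :: "('g, 'b) monoid_scheme \<Rightarrow> nat \<Rightarrow> ('g \<Rightarrow> cmat) \<Rightarrow> bool" where
  "unitary_rep G n \<rho> \<longleftrightarrow>
     (\<forall>g\<in>carrier G. \<forall>i<n. \<forall>j<n. (\<Sum>k<n. \<rho> g i k * cnj (\<rho> g j k)) = idm i j) \<and>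
     (\<forall>g\<in>carrier G. \<forall>h\<in>carrier G. \<forall>i<n. \<forall>j<n.
        \<rho> (g \<otimes>\<^bsub>G\<^esub> h) i j = matmul n (\<rho> g) (\<rho> h) i j)"

definition sites :: "('v, 'e) pre_digraph \<Rightarrow> ('v + 'e) set" where
  "sites \<Lambda> = Inl ` verts \<Lambda> \<union> Inr ` arcs \<Lambda>"

definition prod_op :: "'x set \<Rightarrow> ('x \<Rightarrow> nat) \<Rightarrow> ('x \<Rightarrow> cmat) \<Rightarrow> 'x op" where
  "prod_op S d u = (\<lambda>\<sigma> \<tau>. if \<sigma> \<in> cfgs d S \<and> \<tau> \<in> cfgs d S
                             then (\<Prod>x\<in>S. u x (\<sigma> x) (\<tau> x)) else 0)"

text \<open>Site factors of the gauge transformation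
  A_v(g) = U_v(g) prod_{e out of v} L_e(g) prod_{e into v} R_e(g^-1).\<close>
definition gauge_site ::
  "('v, 'e) pre_digraph \<Rightarrow> ('g, 'b) monoid_scheme \<Rightarrow> ('v + 'e \<Rightarrow> nat) \<Rightarrow>
   ('v \<Rightarrow> 'g \<Rightarrow> cmat) \<Rightarrow> ('e \<Rightarrow> 'g \<Rightarrow> cmat) \<Rightarrow> ('e \<Rightarrow> 'g \<Rightarrow> cmat) \<Rightarrow>
   'v \<Rightarrow> 'g \<Rightarrow> 'v + 'e \<Rightarrow> cmat" where
  "gauge_site \<Lambda> G d U L R v g x = (case x of
       Inl w \<Rightarrow> (if w = v then U w g else idm)
     | Inr e \<Rightarrow> matmul (d (Inr e))
                  (if tail \<Lambda> e = v then L e g else idm)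
                  (if head \<Lambda> e = v then R e (inv\<^bsub>G\<^esub> g) else idm))"

definition gauge_op ::
  "('v, 'e) pre_digraph \<Rightarrow> ('g, 'b) monoid_scheme \<Rightarrow> ('v + 'e \<Rightarrow> nat) \<Rightarrow>
   ('v \<Rightarrow> 'g \<Rightarrow> cmat) \<Rightarrow> ('e \<Rightarrow> 'g \<Rightarrow> cmat) \<Rightarrow> ('e \<Rightarrow> 'g \<Rightarrow> cmat) \<Rightarrow>
   'v \<Rightarrow> 'g \<Rightarrow> ('v + 'e) op" where
  "gauge_op \<Lambda> G d U L R v g = prod_op (sites \<Lambda>) d (gauge_site \<Lambda> G d U L R v g)"

text \<open>Pi_v = integral of A_v(g) against the normalized Haar measure M.\<close>
definition Pi_v ::
  "('v, 'e) pre_digraph \<Rightarrow> ('g, 'b) monoid_scheme \<Rightarrow> 'g measure \<Rightarrow> ('v + 'e \<Rightarrow> nat) \<Rightarrow>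
   ('v \<Rightarrow> 'g \<Rightarrow> cmat) \<Rightarrow> ('e \<Rightarrow> 'g \<Rightarrow> cmat) \<Rightarrow> ('e \<Rightarrow> 'g \<Rightarrow> cmat) \<Rightarrow>
   'v \<Rightarrow> ('v + 'e) op" where
  "Pi_v \<Lambda> G M d U L R v = (\<lambda>\<sigma> \<tau>. LINT g|M. gauge_op \<Lambda> G d U L R v g \<sigma> \<tau>)"

definition Pi_set ::
  "('v, 'e) pre_digraph \<Rightarrow> ('g, 'b) monoid_scheme \<Rightarrow> 'g measure \<Rightarrow> ('v + 'e \<Rightarrow> nat) \<Rightarrow>
   ('v \<Rightarrow> 'g \<Rightarrow> cmat) \<Rightarrow> ('e \<Rightarrow> 'g \<Rightarrow> cmat) \<Rightarrow> ('e \<Rightarrow> 'g \<Rightarrow> cmat) \<Rightarrow>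
   'v set \<Rightarrow> ('v + 'e) op" where
  "Pi_set \<Lambda> G M d U L R W = opprod (cfgs d (sites \<Lambda>)) (Pi_v \<Lambda> G M d U L R) W"

text \<open>Subregion algebra A_r = B(H_r) tensor 1 on H, S the set of all sites.\<close>
definition sub_alg :: "('x \<Rightarrow> nat) \<Rightarrow> 'x set \<Rightarrow> 'x set \<Rightarrow> 'x op set" where
  "sub_alg d S r = {(\<lambda>\<sigma> \<tau>. if \<sigma> \<in> cfgs d S \<and> \<tau> \<in> cfgs d S
        then Or (restrict \<sigma> r) (restrict \<tau> r) *
             (if restrict \<sigma> (S - r) = restrict \<tau> (S - r) then 1 else 0)
        else 0) | Or :: 'x op. True}"

definition interior_verts :: "('v, 'e) pre_digraph \<Rightarrow> ('v + 'e) set \<Rightarrow> 'v set" where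
  "interior_verts \<Lambda> r = {v \<in> verts \<Lambda>. Inl v \<in> r \<and>
      (\<forall>e\<in>arcs \<Lambda>. (tail \<Lambda> e = v \<or> head \<Lambda> e = v) \<longrightarrow> Inr e \<in> r)}"

end

theory Submission
  imports Defs
begin


lemma cnj_meas: "f \<in> borel_measurable M \<Longrightarrow> (\<lambda>g. cnj (f g :: complex)) \<in> borel_measurable M"
  by (rule borel_measurable_continuous_on[OF continuous_on_cnj[OF continuous_on_id]])

definition supp :: "'x cfg set \<Rightarrow> 'x op \<Rightarrow> bool" where
  "supp C A \<longleftrightarrow> (\<forall>\<sigma> \<tau>. \<sigma> \<notin> C \<or> \<tau> \<notin> C \<longrightarrow> A \<sigma> \<tau> = 0)"

lemma opmul_supp: "supp C (opmul C A B)"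
  by (simp add: supp_def opmul_def)

lemma opid_supp: "supp C (opid C)"
  by (simp add: supp_def opid_def)

lemma opmul_assoc: "opmul C (opmul C A B) D = opmul C A (opmul C B D)"
proof (intro ext)
  fix \<sigma> \<tau>
  show "opmul C (opmul C A B) D \<sigma> \<tau> = opmul C A (opmul C B D) \<sigma> \<tau>"
  proof (cases "\<sigma> \<in> C \<and> \<tau> \<in> C")
    case True
    have "opmul C (opmul C A B) D \<sigma> \<tau> = (\<Sum>\<rho>\<in>C. (\<Sum>\<rho>'\<in>C. A \<sigma> \<rho>' * B \<rho>' \<rho>) * D \<rho> \<tau>)"
      using True by (auto simp: opmul_def intro!: sum.cong)
    also have "\<dots> = (\<Sum>\<rho>\<in>C. \<Sum>\<rho>'\<in>C. A \<sigma> \<rho>' * B \<rho>' \<rho> * D \<rho> \<tau>)"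
      by (simp add: sum_distrib_right)
    also have "\<dots> = (\<Sum>\<rho>'\<in>C. \<Sum>\<rho>\<in>C. A \<sigma> \<rho>' * B \<rho>' \<rho> * D \<rho> \<tau>)"
      by (rule sum.swap)
    also have "\<dots> = (\<Sum>\<rho>'\<in>C. A \<sigma> \<rho>' * (\<Sum>\<rho>\<in>C. B \<rho>' \<rho> * D \<rho> \<tau>))"
      by (simp add: sum_distrib_left mult.assoc)
    also have "\<dots> = opmul C A (opmul C B D) \<sigma> \<tau>"
      using True by (auto simp: opmul_def intro!: sum.cong)
    finally show ?thesis .
  qed (auto simp: opmul_def)
qed

lemma delta_sum1: "finite C \<Longrightarrow> x \<in> C \<Longrightarrow> (\<Sum>\<rho>\<in>C. (if x = \<rho> then 1 else 0) * (f \<rho>::complex)) = f x"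
proof -
  assume "finite C" "x \<in> C"
  have "(\<Sum>\<rho>\<in>C. (if x = \<rho> then 1 else 0) * f \<rho>) = (\<Sum>\<rho>\<in>C. if x = \<rho> then f \<rho> else 0)"
    by (rule sum.cong) auto
  thus ?thesis using \<open>finite C\<close> \<open>x \<in> C\<close> by simp
qed

lemma delta_sum2: "finite C \<Longrightarrow> x \<in> C \<Longrightarrow> (\<Sum>\<rho>\<in>C. (f \<rho>::complex) * (if \<rho> = x then 1 else 0)) = f x"
proof -
  assume "finite C" "x \<in> C"
  have "(\<Sum>\<rho>\<in>C. f \<rho> * (if \<rho> = x then 1 else 0)) = (\<Sum>\<rho>\<in>C. if x = \<rho> then f \<rho> else 0)"
    by (rule sum.cong) auto
  thus ?thesis using \<open>finite C\<close> \<open>x \<in> C\<close> by simp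
qed

lemma opid_left: "finite C \<Longrightarrow> supp C A \<Longrightarrow> opmul C (opid C) A = A"
proof (intro ext)
  fix \<sigma> \<tau> assume f: "finite C" and s: "supp C A"
  show "opmul C (opid C) A \<sigma> \<tau> = A \<sigma> \<tau>"
  proof (cases "\<sigma> \<in> C \<and> \<tau> \<in> C")
    case True
    have "opmul C (opid C) A \<sigma> \<tau> = (\<Sum>\<rho>\<in>C. (if \<sigma> = \<rho> then 1 else 0) * A \<rho> \<tau>)"
      using True by (auto simp: opmul_def opid_def intro!: sum.cong)
    then show ?thesis using True f delta_sum1[of C \<sigma> "\<lambda>\<rho>. A \<rho> \<tau>"] by simp
  qed (use s in \<open>auto simp: opmul_def supp_def\<close>)
qed

lemma opid_right: "finite C \<Longrightarrow> supp C A \<Longrightarrow> opmul C A (opid C) = A"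
proof (intro ext)
  fix \<sigma> \<tau> assume f: "finite C" and s: "supp C A"
  show "opmul C A (opid C) \<sigma> \<tau> = A \<sigma> \<tau>"
  proof (cases "\<sigma> \<in> C \<and> \<tau> \<in> C")
    case True
    have "opmul C A (opid C) \<sigma> \<tau> = (\<Sum>\<rho>\<in>C. A \<sigma> \<rho> * (if \<rho> = \<tau> then 1 else 0))"
      using True by (auto simp: opmul_def opid_def intro!: sum.cong)
    then show ?thesis using True f delta_sum2[of C \<tau> "\<lambda>\<rho>. A \<sigma> \<rho>"] by simp
  qed (use s in \<open>auto simp: opmul_def supp_def\<close>)
qed

definition commfam :: "'x cfg set \<Rightarrow> ('i \<Rightarrow> 'x op) \<Rightarrow> 'i set \<Rightarrow> bool" where
  "commfam C P I \<longleftrightarrow> (\<forall>i\<in>I. \<forall>j\<in>I. opmul C (P i) (P j) = opmul C (P j) (P i))"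

lemma commfam_mono: "commfam C P K \<Longrightarrow> I \<subseteq> K \<Longrightarrow> commfam C P I"
  by (auto simp: commfam_def)

lemma opprod_empty[simp]: "opprod C P {} = opid C"
  by (simp add: opprod_def)

lemma opprod_insert:
  assumes "finite I" "i \<notin> I" "commfam C P (insert i I)"
  shows "opprod C P (insert i I) = opmul C (P i) (opprod C P I)"
proof -
  have cfc: "comp_fun_commute_on (insert i I) (\<lambda>i acc. opmul C (P i) acc)"
  proof
    fix x y assume "x \<in> insert i I" "y \<in> insert i I"
    then have "opmul C (P y) (P x) = opmul C (P x) (P y)" using assms(3) by (auto simp: commfam_def)
    then have key: "\<And>acc. opmul C (P y) (opmul C (P x) acc) = opmul C (P x) (opmul C (P y) acc)"
      by (metis opmul_assoc)
    show "(\<lambda>acc. opmul C (P y) acc) \<circ> (\<lambda>acc. opmul C (P x) acc) =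
          (\<lambda>acc. opmul C (P x) acc) \<circ> (\<lambda>acc. opmul C (P y) acc)"
      by (rule ext) (simp only: comp_apply key)
  qed
  have "Finite_Set.fold (\<lambda>i acc. opmul C (P i) acc) (opid C) (insert i I) =
     opmul C (P i) (Finite_Set.fold (\<lambda>i acc. opmul C (P i) acc) (opid C) I)"
    using assms by (intro comp_fun_commute_on.fold_insert[OF cfc]) auto
  then show ?thesis unfolding opprod_def .
qed

lemma opprod_supp: "finite I \<Longrightarrow> commfam C P I \<Longrightarrow> supp C (opprod C P I)"
proof (induction I rule: finite_induct)
  case empty then show ?case by (simp add: opid_supp)
next
  case (insert i I)
  have "opprod C P (insert i I) = opmul C (P i) (opprod C P I)"
    using insert.hyps insert.prems by (rule opprod_insert)
  then show ?case by (simp only: opmul_supp)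
qed

lemma opprod_comm:
  assumes C: "finite C" and B: "supp C B"
  shows "finite I \<Longrightarrow> commfam C P I \<Longrightarrow> (\<forall>i\<in>I. opmul C B (P i) = opmul C (P i) B) \<Longrightarrow>
    opmul C B (opprod C P I) = opmul C (opprod C P I) B"
proof (induction I rule: finite_induct)
  case empty then show ?case using C B by (simp add: opid_left opid_right)
next
  case (insert i I)
  have IH: "opmul C B (opprod C P I) = opmul C (opprod C P I) B"
    using insert.IH insert.prems commfam_mono by blast
  have e1: "opprod C P (insert i I) = opmul C (P i) (opprod C P I)"
    using insert.hyps insert.prems(1) by (rule opprod_insert)
  have hB: "opmul C B (P i) = opmul C (P i) B" using insert.prems(2) by blast
  have "opmul C B (opmul C (P i) (opprod C P I)) = opmul C (opmul C B (P i)) (opprod C P I)"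
    by (simp only: opmul_assoc)
  also have "\<dots> = opmul C (P i) (opmul C B (opprod C P I))"
    by (simp only: hB opmul_assoc)
  also have "\<dots> = opmul C (opmul C (P i) (opprod C P I)) B"
    by (simp only: IH opmul_assoc)
  finally show ?case by (simp only: e1)
qed

lemma opprod_idem:
  assumes C: "finite C"
  shows "finite I \<Longrightarrow> commfam C P I \<Longrightarrow> \<forall>i\<in>I. supp C (P i) \<Longrightarrow> \<forall>i\<in>I. opmul C (P i) (P i) = P i \<Longrightarrow>
    opmul C (opprod C P I) (opprod C P I) = opprod C P I"
proof (induction I rule: finite_induct)
  case empty then show ?case using C by (simp add: opid_left opid_supp)
next
  case (insert i I)
  have cf: "commfam C P I" using insert.prems(1) commfam_mono by blast
  have IH: "opmul C (opprod C P I) (opprod C P I) = opprod C P I"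
    using insert.IH[OF cf] insert.prems(2,3) by blast
  have sPi: "supp C (P i)" using insert.prems(2) by blast
  have ci: "\<forall>j\<in>I. opmul C (P i) (P j) = opmul C (P j) (P i)"
    using insert.prems(1) unfolding commfam_def by blast
  have cm: "opmul C (P i) (opprod C P I) = opmul C (opprod C P I) (P i)"
    by (rule opprod_comm[OF C sPi insert.hyps(1) cf ci])
  have e1: "opprod C P (insert i I) = opmul C (P i) (opprod C P I)"
    using insert.hyps insert.prems(1) by (rule opprod_insert)
  have pi: "opmul C (P i) (P i) = P i" using insert.prems(3) by blast
  have "opmul C (opmul C (P i) (opprod C P I)) (opmul C (P i) (opprod C P I))
      = opmul C (P i) (opmul C (opmul C (opprod C P I) (P i)) (opprod C P I))"
    by (simp only: opmul_assoc)
  also have "\<dots> = opmul C (opmul C (P i) (P i)) (opmul C (opprod C P I) (opprod C P I))"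
    by (simp only: cm[symmetric] opmul_assoc)
  also have "\<dots> = opmul C (P i) (opprod C P I)"
    by (simp only: IH pi)
  finally show ?case by (simp only: e1)
qed

lemma opprod_union:
  assumes C: "finite C" and fB: "finite B"
  shows "finite A \<Longrightarrow> A \<inter> B = {} \<Longrightarrow> commfam C P (A \<union> B) \<Longrightarrow>
    opprod C P (A \<union> B) = opmul C (opprod C P A) (opprod C P B)"
proof (induction A rule: finite_induct)
  case empty
  have "commfam C P B" using empty.prems by simp
  then have "opmul C (opid C) (opprod C P B) = opprod C P B"
    using C opprod_supp[OF fB] opid_left by blast
  then show ?case by simp
next
  case (insert a A)
  have cf: "commfam C P (A \<union> B)" by (rule commfam_mono[OF insert.prems(2)]) blast
  have cfA: "commfam C P (insert a A)" by (rule commfam_mono[OF insert.prems(2)]) blast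
  have dj: "A \<inter> B = {}" using insert.prems(1) by blast
  have IH: "opprod C P (A \<union> B) = opmul C (opprod C P A) (opprod C P B)"
    using insert.IH[OF dj cf] .
  have eq: "insert a A \<union> B = insert a (A \<union> B)" by blast
  have fAB: "finite (A \<union> B)" using insert.hyps(1) fB by blast
  have naB: "a \<notin> A \<union> B" using insert.hyps(2) insert.prems(1) by blast
  have cf2: "commfam C P (insert a (A \<union> B))" by (rule commfam_mono[OF insert.prems(2)]) blast
  have "opprod C P (insert a A \<union> B) = opprod C P (insert a (A \<union> B))" by (simp only: eq)
  also have "\<dots> = opmul C (P a) (opprod C P (A \<union> B))"
    by (rule opprod_insert[OF fAB naB cf2])
  also have "\<dots> = opmul C (opmul C (P a) (opprod C P A)) (opprod C P B)"
    by (simp only: IH opmul_assoc)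
  also have "\<dots> = opmul C (opprod C P (insert a A)) (opprod C P B)"
    using opprod_insert[OF insert.hyps cfA] by simp
  finally show ?case .
qed


definition adjop :: "'x op \<Rightarrow> 'x op" where "adjop A = (\<lambda>\<sigma> \<tau>. cnj (A \<tau> \<sigma>))"

definition intop :: "'g measure \<Rightarrow> ('g \<Rightarrow> 'x op) \<Rightarrow> 'x op" where
  "intop M F = (\<lambda>\<sigma> \<tau>. LINT g|M. F g \<sigma> \<tau>)"

definition good :: "'x cfg set \<Rightarrow> 'g measure \<Rightarrow> ('g \<Rightarrow> 'x op) \<Rightarrow> bool" where
  "good C M F \<longleftrightarrow> (\<forall>\<sigma> \<tau>. (\<lambda>g. F g \<sigma> \<tau>) \<in> borel_measurable M) \<and>
     (\<exists>B\<ge>0. \<forall>g\<in>space M. \<forall>\<sigma>\<in>C. \<forall>\<tau>\<in>C. norm (F g \<sigma> \<tau>) \<le> B)"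

lemma good_integrable:
  assumes "prob_space M" "good C M F" "\<sigma> \<in> C" "\<tau> \<in> C"
  shows "integrable M (\<lambda>g. F g \<sigma> \<tau>)"
proof -
  interpret prob_space M by fact
  obtain B where B: "\<forall>g\<in>space M. \<forall>\<sigma>\<in>C. \<forall>\<tau>\<in>C. norm (F g \<sigma> \<tau>) \<le> B"
    using assms(2) unfolding good_def by blast
  have m: "(\<lambda>g. F g \<sigma> \<tau>) \<in> borel_measurable M" using assms(2) unfolding good_def by blast
  show ?thesis
    by (rule integrable_const_bound[where B=B]) (use B assms(3,4) m in \<open>auto intro!: AE_I2\<close>)
qed

lemma good_const:
  assumes "finite C" shows "good C M (\<lambda>g. X)"
proof -
  have "\<forall>\<sigma>\<in>C. \<forall>\<tau>\<in>C. norm (X \<sigma> \<tau>) \<le> (\<Sum>p\<in>C \<times> C. norm (X (fst p) (snd p)))"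
  proof (intro ballI)
    fix \<sigma> \<tau> assume "\<sigma> \<in> C" "\<tau> \<in> C"
    then have "(\<sigma>, \<tau>) \<in> C \<times> C" by simp
    from member_le_sum[OF this, of "\<lambda>p. norm (X (fst p) (snd p))"] assms
    show "norm (X \<sigma> \<tau>) \<le> (\<Sum>p\<in>C \<times> C. norm (X (fst p) (snd p)))" by simp
  qed
  moreover have "0 \<le> (\<Sum>p\<in>C \<times> C. norm (X (fst p) (snd p)))" by (rule sum_nonneg) simp
  ultimately show ?thesis unfolding good_def by auto
qed

lemma good_opmul:
  assumes C: "finite C" and F: "good C M F" and H: "good C M H"
  shows "good C M (\<lambda>g. opmul C (F g) (H g))"
proof -
  have mF[measurable]: "\<And>\<sigma> \<tau>. (\<lambda>g. F g \<sigma> \<tau>) \<in> borel_measurable M" using F unfolding good_def by blast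
  have mH[measurable]: "\<And>\<sigma> \<tau>. (\<lambda>g. H g \<sigma> \<tau>) \<in> borel_measurable M" using H unfolding good_def by blast
  obtain B1 where B1: "B1 \<ge> 0" "\<forall>g\<in>space M. \<forall>\<sigma>\<in>C. \<forall>\<tau>\<in>C. norm (F g \<sigma> \<tau>) \<le> B1"
    using F unfolding good_def by blast
  obtain B2 where B2: "B2 \<ge> 0" "\<forall>g\<in>space M. \<forall>\<sigma>\<in>C. \<forall>\<tau>\<in>C. norm (H g \<sigma> \<tau>) \<le> B2"
    using H unfolding good_def by blast
  have m: "(\<lambda>g. opmul C (F g) (H g) \<sigma> \<tau>) \<in> borel_measurable M" for \<sigma> \<tau>
    unfolding opmul_def by measurable
  have b: "norm (opmul C (F g) (H g) \<sigma> \<tau>) \<le> real (card C) * (B1 * B2)"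
    if "g \<in> space M" "\<sigma> \<in> C" "\<tau> \<in> C" for g \<sigma> \<tau>
  proof -
    have "norm (opmul C (F g) (H g) \<sigma> \<tau>) = norm (\<Sum>\<rho>\<in>C. F g \<sigma> \<rho> * H g \<rho> \<tau>)"
      using that by (simp add: opmul_def)
    also have "\<dots> \<le> (\<Sum>\<rho>\<in>C. norm (F g \<sigma> \<rho> * H g \<rho> \<tau>))" by (rule norm_sum)
    also have "\<dots> \<le> (\<Sum>\<rho>\<in>C. B1 * B2)"
    proof (rule sum_mono)
      fix \<rho> assume "\<rho> \<in> C"
      then show "norm (F g \<sigma> \<rho> * H g \<rho> \<tau>) \<le> B1 * B2"
        using that B1 B2 by (auto simp: norm_mult intro!: mult_mono)
    qed
    also have "\<dots> = real (card C) * (B1 * B2)" by simp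
    finally show ?thesis .
  qed
  show ?thesis unfolding good_def using m b B1(1) B2(1) by (auto intro!: exI[of _ "real (card C) * (B1 * B2)"])
qed

lemma good_adjop: "good C M F \<Longrightarrow> good C M (\<lambda>g. adjop (F g))"
  unfolding good_def adjop_def
  by (auto intro!: borel_measurable_continuous_on[OF continuous_on_cnj[OF continuous_on_id]])

lemma good_comp:
  assumes F: "good C M F" and phi: "\<phi> \<in> M \<rightarrow>\<^sub>M M" shows "good C M (\<lambda>g. F (\<phi> g))"
proof -
  obtain B where B: "B \<ge> 0" "\<forall>g\<in>space M. \<forall>\<sigma>\<in>C. \<forall>\<tau>\<in>C. norm (F g \<sigma> \<tau>) \<le> B"
    using F unfolding good_def by blast
  have m: "(\<lambda>g. F g \<sigma> \<tau>) \<in> borel_measurable M" for \<sigma> \<tau> using F unfolding good_def by blast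
  have "(\<lambda>g. F (\<phi> g) \<sigma> \<tau>) \<in> borel_measurable M" for \<sigma> \<tau>
    using measurable_compose[OF phi m] by simp
  moreover have "\<forall>g\<in>space M. \<forall>\<sigma>\<in>C. \<forall>\<tau>\<in>C. norm (F (\<phi> g) \<sigma> \<tau>) \<le> B"
    using B(2) measurable_space[OF phi] by blast
  ultimately show ?thesis unfolding good_def using B(1) by blast
qed

lemma supp_intop: "\<forall>g. supp C (F g) \<Longrightarrow> supp C (intop M F)"
  by (simp add: supp_def intop_def)

lemma intop_opmul_left:
  assumes C: "finite C" and P: "prob_space M" and F: "good C M F"
  shows "opmul C (intop M F) B = intop M (\<lambda>g. opmul C (F g) B)"
proof (intro ext)
  fix \<sigma> \<tau>
  show "opmul C (intop M F) B \<sigma> \<tau> = intop M (\<lambda>g. opmul C (F g) B) \<sigma> \<tau>"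
  proof (cases "\<sigma> \<in> C \<and> \<tau> \<in> C")
    case True
    have int: "\<rho> \<in> C \<Longrightarrow> integrable M (\<lambda>g. F g \<sigma> \<rho> * B \<rho> \<tau>)" for \<rho>
      using good_integrable[OF P F] True by auto
    have "opmul C (intop M F) B \<sigma> \<tau> = (\<Sum>\<rho>\<in>C. (LINT g|M. F g \<sigma> \<rho>) * B \<rho> \<tau>)"
      using True by (simp add: opmul_def intop_def)
    also have "\<dots> = (\<Sum>\<rho>\<in>C. LINT g|M. F g \<sigma> \<rho> * B \<rho> \<tau>)" by simp
    also have "\<dots> = integral\<^sup>L M (\<lambda>g. \<Sum>\<rho>\<in>C. F g \<sigma> \<rho> * B \<rho> \<tau>)"
      by (rule Bochner_Integration.integral_sum[symmetric]) (rule int)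
    also have "\<dots> = intop M (\<lambda>g. opmul C (F g) B) \<sigma> \<tau>"
      using True by (simp add: opmul_def intop_def)
    finally show ?thesis .
  qed (auto simp: opmul_def intop_def)
qed

lemma intop_opmul_right:
  assumes C: "finite C" and P: "prob_space M" and F: "good C M F"
  shows "opmul C B (intop M F) = intop M (\<lambda>g. opmul C B (F g))"
proof (intro ext)
  fix \<sigma> \<tau>
  show "opmul C B (intop M F) \<sigma> \<tau> = intop M (\<lambda>g. opmul C B (F g)) \<sigma> \<tau>"
  proof (cases "\<sigma> \<in> C \<and> \<tau> \<in> C")
    case True
    have int: "\<rho> \<in> C \<Longrightarrow> integrable M (\<lambda>g. B \<sigma> \<rho> * F g \<rho> \<tau>)" for \<rho>
      using good_integrable[OF P F] True by auto
    have "opmul C B (intop M F) \<sigma> \<tau> = (\<Sum>\<rho>\<in>C. B \<sigma> \<rho> * (LINT g|M. F g \<rho> \<tau>))"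
      using True by (simp add: opmul_def intop_def)
    also have "\<dots> = (\<Sum>\<rho>\<in>C. LINT g|M. B \<sigma> \<rho> * F g \<rho> \<tau>)" by simp
    also have "\<dots> = integral\<^sup>L M (\<lambda>g. \<Sum>\<rho>\<in>C. B \<sigma> \<rho> * F g \<rho> \<tau>)"
      by (rule Bochner_Integration.integral_sum[symmetric]) (rule int)
    also have "\<dots> = intop M (\<lambda>g. opmul C B (F g)) \<sigma> \<tau>"
      using True by (simp add: opmul_def intop_def)
    finally show ?thesis .
  qed (auto simp: opmul_def intop_def)
qed

lemma intop_cong:
  assumes "\<And>g. g \<in> space M \<Longrightarrow> F g = H g" shows "intop M F = intop M H"
proof (intro ext)
  fix \<sigma> \<tau> show "intop M F \<sigma> \<tau> = intop M H \<sigma> \<tau>"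
    unfolding intop_def by (rule Bochner_Integration.integral_cong) (simp_all add: assms)
qed

lemma intop_const: "prob_space M \<Longrightarrow> intop M (\<lambda>g. X) = X"
  unfolding intop_def by (simp add: prob_space.prob_space)

lemma intop_shift:
  assumes "good C M F" "\<phi> \<in> M \<rightarrow>\<^sub>M M" "distr M M \<phi> = M"
  shows "intop M (\<lambda>g. F (\<phi> g)) = intop M F"
proof (intro ext)
  fix \<sigma> \<tau>
  have m: "(\<lambda>g. F g \<sigma> \<tau>) \<in> borel_measurable M" using assms(1) unfolding good_def by blast
  have "(LINT g|M. F (\<phi> g) \<sigma> \<tau>) = integral\<^sup>L (distr M M \<phi>) (\<lambda>g. F g \<sigma> \<tau>)"
    by (rule integral_distr[symmetric, OF assms(2) m])
  then show "intop M (\<lambda>g. F (\<phi> g)) \<sigma> \<tau> = intop M F \<sigma> \<tau>"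
    unfolding intop_def using assms(3) by simp
qed


locale haarfam =
  fixes C :: "'x cfg set" and G :: "('g, 'b) monoid_scheme" and M :: "'g measure" and A :: "'g \<Rightarrow> 'x op"
  assumes finC: "finite C" and grp: "group G" and prob: "prob_space M" and sp: "space M = carrier G"
    and left: "\<forall>g\<in>carrier G. (\<lambda>h. g \<otimes>\<^bsub>G\<^esub> h) \<in> M \<rightarrow>\<^sub>M M \<and> distr M M (\<lambda>h. g \<otimes>\<^bsub>G\<^esub> h) = M"
    and right: "\<forall>g\<in>carrier G. (\<lambda>h. h \<otimes>\<^bsub>G\<^esub> g) \<in> M \<rightarrow>\<^sub>M M \<and> distr M M (\<lambda>h. h \<otimes>\<^bsub>G\<^esub> g) = M"
    and hom: "\<forall>g\<in>carrier G. \<forall>h\<in>carrier G. opmul C (A g) (A h) = A (g \<otimes>\<^bsub>G\<^esub> h)"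
    and adj: "\<forall>g\<in>carrier G. A (inv\<^bsub>G\<^esub> g) = adjop (A g)"
    and goodA: "good C M A"
begin

definition P where "P = intop M A"

definition Tw where "Tw X = intop M (\<lambda>g. opmul C (opmul C (A g) X) (adjop (A g)))"


lemma PA: "g \<in> carrier G \<Longrightarrow> opmul C P (A g) = P"
proof -
  assume g: "g \<in> carrier G"
  have "opmul C P (A g) = intop M (\<lambda>h. opmul C (A h) (A g))"
    unfolding P_def by (rule intop_opmul_left[OF finC prob goodA])
  also have "\<dots> = intop M (\<lambda>h. A (h \<otimes>\<^bsub>G\<^esub> g))"
    by (rule intop_cong) (use hom g sp in auto)
  also have "\<dots> = P"
    unfolding P_def using right g by (intro intop_shift[OF goodA]) auto
  finally show ?thesis .
qed

lemma AP: "g \<in> carrier G \<Longrightarrow> opmul C (A g) P = P"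
proof -
  assume g: "g \<in> carrier G"
  have "opmul C (A g) P = intop M (\<lambda>h. opmul C (A g) (A h))"
    unfolding P_def by (rule intop_opmul_right[OF finC prob goodA])
  also have "\<dots> = intop M (\<lambda>h. A (g \<otimes>\<^bsub>G\<^esub> h))"
    by (rule intop_cong) (use hom g sp in auto)
  also have "\<dots> = P"
    unfolding P_def using left g by (intro intop_shift[OF goodA]) auto
  finally show ?thesis .
qed

lemma PP: "opmul C P P = P"
proof -
  have "opmul C P P = intop M (\<lambda>h. opmul C (A h) P)"
    unfolding P_def by (rule intop_opmul_left[OF finC prob goodA])
  also have "\<dots> = intop M (\<lambda>h. P)"
    by (rule intop_cong) (use AP sp in auto)
  also have "\<dots> = P" by (rule intop_const[OF prob])
  finally show ?thesis .
qed

lemma P_comm: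
  assumes "\<forall>g\<in>carrier G. opmul C (A g) B = opmul C B (A g)"
  shows "opmul C P B = opmul C B P"
proof -
  have "opmul C P B = intop M (\<lambda>h. opmul C (A h) B)"
    unfolding P_def by (rule intop_opmul_left[OF finC prob goodA])
  also have "\<dots> = intop M (\<lambda>h. opmul C B (A h))"
    by (rule intop_cong) (use assms sp in auto)
  also have "\<dots> = opmul C B P"
    unfolding P_def by (rule intop_opmul_right[OF finC prob goodA, symmetric])
  finally show ?thesis .
qed

lemma goodF: "good C M (\<lambda>g. opmul C (opmul C (A g) X) (adjop (A g)))"
  by (intro good_opmul[OF finC] good_adjop good_const[OF finC] goodA)

lemma F_carrier: "g \<in> carrier G \<Longrightarrow> opmul C (opmul C (A g) X) (adjop (A g)) = opmul C (opmul C (A g) X) (A (inv\<^bsub>G\<^esub> g))"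
  using adj by simp

lemma inv_carrier: "g \<in> carrier G \<Longrightarrow> inv\<^bsub>G\<^esub> g \<in> carrier G"
  using grp by (simp add: group.inv_closed)

lemma Tw_commA:
  assumes h: "h \<in> carrier G"
  shows "opmul C (A h) (Tw X) = opmul C (Tw X) (A h)"
proof -
  define F where "F = (\<lambda>g. opmul C (opmul C (A g) X) (adjop (A g)))"
  have gF: "good C M F" unfolding F_def by (rule goodF)
  have mh: "(\<lambda>g. h \<otimes>\<^bsub>G\<^esub> g) \<in> M \<rightarrow>\<^sub>M M" and dh: "distr M M (\<lambda>g. h \<otimes>\<^bsub>G\<^esub> g) = M"
    using left h by auto
  have key: "opmul C (A h) (F g) = opmul C (F (h \<otimes>\<^bsub>G\<^esub> g)) (A h)" if g: "g \<in> carrier G" for g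
  proof -
    have hg: "h \<otimes>\<^bsub>G\<^esub> g \<in> carrier G" using grp g h by (simp add: group.subgroupE(4) group.subgroup_self monoid.m_closed group.is_monoid)
    have iv: "inv\<^bsub>G\<^esub> (h \<otimes>\<^bsub>G\<^esub> g) \<otimes>\<^bsub>G\<^esub> h = inv\<^bsub>G\<^esub> g"
      using grp g h by (simp add: group.inv_mult_group group.inv_closed monoid.m_assoc group.is_monoid group.l_inv monoid.r_one)
    have "opmul C (A h) (F g) = opmul C (opmul C (opmul C (A h) (A g)) X) (A (inv\<^bsub>G\<^esub> g))"
      unfolding F_def using F_carrier[OF g] by (simp only: opmul_assoc)
    also have "\<dots> = opmul C (opmul C (A (h \<otimes>\<^bsub>G\<^esub> g)) X) (A (inv\<^bsub>G\<^esub> (h \<otimes>\<^bsub>G\<^esub> g) \<otimes>\<^bsub>G\<^esub> h))"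
      using hom g h by (simp add: iv)
    also have "\<dots> = opmul C (opmul C (A (h \<otimes>\<^bsub>G\<^esub> g)) X) (opmul C (A (inv\<^bsub>G\<^esub> (h \<otimes>\<^bsub>G\<^esub> g))) (A h))"
      using hom hg h inv_carrier[OF hg] by simp
    also have "\<dots> = opmul C (F (h \<otimes>\<^bsub>G\<^esub> g)) (A h)"
      unfolding F_def using F_carrier[OF hg] by (simp only: opmul_assoc)
    finally show ?thesis .
  qed
  have "opmul C (A h) (Tw X) = intop M (\<lambda>g. opmul C (A h) (F g))"
    unfolding Tw_def F_def[symmetric] by (rule intop_opmul_right[OF finC prob gF])
  also have "\<dots> = intop M (\<lambda>g. opmul C (F (h \<otimes>\<^bsub>G\<^esub> g)) (A h))"
    by (rule intop_cong) (use key sp in auto)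
  also have "\<dots> = opmul C (intop M (\<lambda>g. F (h \<otimes>\<^bsub>G\<^esub> g))) (A h)"
    by (rule intop_opmul_left[OF finC prob good_comp[OF gF mh], symmetric])
  also have "intop M (\<lambda>g. F (h \<otimes>\<^bsub>G\<^esub> g)) = Tw X"
    unfolding Tw_def F_def[symmetric] by (rule intop_shift[OF gF mh dh])
  finally show ?thesis .
qed

lemma Tw_commP: "opmul C P (Tw X) = opmul C (Tw X) P"
  using Tw_commA by (intro P_comm) auto

lemma Tw_PXP: "opmul C (opmul C P (Tw X)) P = opmul C (opmul C P X) P"
proof -
  define F where "F = (\<lambda>g. opmul C (opmul C (A g) X) (adjop (A g)))"
  have gF: "good C M F" unfolding F_def by (rule goodF)
  have gF2: "good C M (\<lambda>g. opmul C P (F g))" by (intro good_opmul[OF finC] good_const[OF finC] gF)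
  have "opmul C (opmul C P (Tw X)) P = opmul C (intop M (\<lambda>g. opmul C P (F g))) P"
    unfolding Tw_def F_def[symmetric] by (simp only: intop_opmul_right[OF finC prob gF])
  also have "\<dots> = intop M (\<lambda>g. opmul C (opmul C P (F g)) P)"
    by (rule intop_opmul_left[OF finC prob gF2])
  also have "\<dots> = intop M (\<lambda>g. opmul C (opmul C P X) P)"
  proof (rule intop_cong)
    fix g assume "g \<in> space M"
    then have g: "g \<in> carrier G" using sp by simp
    have "opmul C (opmul C P (F g)) P = opmul C (opmul C (opmul C P (A g)) X) (opmul C (A (inv\<^bsub>G\<^esub> g)) P)"
      unfolding F_def using F_carrier[OF g] by (simp only: opmul_assoc)
    also have "\<dots> = opmul C (opmul C P X) P"
      using PA[OF g] AP[OF inv_carrier[OF g]] by simp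
    finally show "opmul C (opmul C P (F g)) P = opmul C (opmul C P X) P" .
  qed
  also have "\<dots> = opmul C (opmul C P X) P" by (rule intop_const[OF prob])
  finally show ?thesis .
qed

lemma Tw_commB:
  assumes "\<forall>g\<in>carrier G. opmul C (A g) B = opmul C B (A g)" and "opmul C X B = opmul C B X"
  shows "opmul C B (Tw X) = opmul C (Tw X) B"
proof -
  define F where "F = (\<lambda>g. opmul C (opmul C (A g) X) (adjop (A g)))"
  have gF: "good C M F" unfolding F_def by (rule goodF)
  have "opmul C B (Tw X) = intop M (\<lambda>g. opmul C B (F g))"
    unfolding Tw_def F_def[symmetric] by (rule intop_opmul_right[OF finC prob gF])
  also have "\<dots> = intop M (\<lambda>g. opmul C (F g) B)"
  proof (rule intop_cong)
    fix g assume "g \<in> space M"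
    then have g: "g \<in> carrier G" using sp by simp
    have c1: "opmul C B (A g) = opmul C (A g) B" using assms(1) g by simp
    have c2: "opmul C B (A (inv\<^bsub>G\<^esub> g)) = opmul C (A (inv\<^bsub>G\<^esub> g)) B" using assms(1) inv_carrier[OF g] by simp
    have "opmul C B (F g) = opmul C (opmul C (opmul C B (A g)) X) (A (inv\<^bsub>G\<^esub> g))"
      unfolding F_def using F_carrier[OF g] by (simp only: opmul_assoc)
    also have "\<dots> = opmul C (opmul C (A g) (opmul C B X)) (A (inv\<^bsub>G\<^esub> g))"
      by (simp only: c1 opmul_assoc)
    also have "\<dots> = opmul C (opmul C (A g) X) (opmul C B (A (inv\<^bsub>G\<^esub> g)))"
      by (simp only: assms(2)[symmetric] opmul_assoc)
    also have "\<dots> = opmul C (F g) B"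
      unfolding F_def using F_carrier[OF g] by (simp only: c2 opmul_assoc)
    finally show "opmul C B (F g) = opmul C (F g) B" .
  qed
  also have "\<dots> = opmul C (Tw X) B"
    unfolding Tw_def F_def[symmetric] by (rule intop_opmul_left[OF finC prob gF, symmetric])
  finally show ?thesis .
qed

end


section \<open>Matrices\<close>

definition cl :: "nat \<Rightarrow> cmat \<Rightarrow> cmat" where
  "cl n A = (\<lambda>i j. if i < n \<and> j < n then A i j else 0)"

definition mm :: "nat \<Rightarrow> cmat \<Rightarrow> cmat \<Rightarrow> cmat" where
  "mm n A B = cl n (matmul n A B)"

definition cadj :: "cmat \<Rightarrow> cmat" where
  "cadj A = (\<lambda>i j. cnj (A j i))"

lemma cl_cl[simp]: "cl n (cl n A) = cl n A"
  by (simp add: cl_def fun_eq_iff)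

lemma cl_mm[simp]: "cl n (mm n A B) = mm n A B"
  by (simp add: mm_def)

lemma mm_clL[simp]: "mm n (cl n A) B = mm n A B"
  by (auto simp: mm_def cl_def matmul_def intro!: ext sum.cong)

lemma mm_clR[simp]: "mm n A (cl n B) = mm n A B"
  by (auto simp: mm_def cl_def matmul_def intro!: ext sum.cong)

lemma mm_assoc: "mm n (mm n A B) D = mm n A (mm n B D)"
proof -
  have "mm n (mm n A B) D = mm n (matmul n A B) D" by (simp add: mm_def[of n A B])
  also have "\<dots> = cl n (matmul n (matmul n A B) D)" by (simp add: mm_def)
  also have "matmul n (matmul n A B) D = matmul n A (matmul n B D)"
    by (auto simp: matmul_def sum_distrib_left sum_distrib_right mult.assoc intro!: ext
      intro: sum.swap[THEN trans])
  also have "cl n (matmul n A (matmul n B D)) = mm n A (matmul n B D)" by (simp add: mm_def)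
  also have "\<dots> = mm n A (mm n B D)" by (simp add: mm_def[of n B D])
  finally show ?thesis .
qed

lemma mm_idL[simp]: "mm n idm A = cl n A"
proof -
  have "matmul n idm A i j = A i j" if "i < n" for i j
  proof -
    have "matmul n idm A i j = (\<Sum>k<n. (if i = k then 1 else 0) * A k j)"
      by (auto simp: matmul_def idm_def intro!: sum.cong)
    then show ?thesis using that delta_sum1[of "{..<n}" i "\<lambda>k. A k j"] by simp
  qed
  then show ?thesis by (auto simp: mm_def cl_def fun_eq_iff)
qed

lemma mm_idR[simp]: "mm n A idm = cl n A"
proof -
  have "matmul n A idm i j = A i j" if "j < n" for i j
  proof -
    have "matmul n A idm i j = (\<Sum>k<n. A i k * (if k = j then 1 else 0))"
      by (auto simp: matmul_def idm_def intro!: sum.cong)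
    then show ?thesis using that delta_sum2[of "{..<n}" j "\<lambda>k. A i k"] by simp
  qed
  then show ?thesis by (auto simp: mm_def cl_def fun_eq_iff)
qed

lemma cadj_mm: "cadj (mm n A B) = mm n (cadj B) (cadj A)"
  by (auto simp: cadj_def mm_def cl_def matmul_def mult.commute intro!: ext sum.cong)

lemma cadj_cl: "cadj (cl n A) = cl n (cadj A)"
  by (auto simp: cadj_def cl_def intro!: ext)

lemma cadj_idm: "cadj idm = idm"
  by (auto simp: cadj_def idm_def intro!: ext)

lemma ur_iff:
  "unitary_rep G n \<rho> \<longleftrightarrow>
     (\<forall>g\<in>carrier G. mm n (\<rho> g) (cadj (\<rho> g)) = cl n idm) \<and>
     (\<forall>g\<in>carrier G. \<forall>h\<in>carrier G. cl n (\<rho> (g \<otimes>\<^bsub>G\<^esub> h)) = mm n (\<rho> g) (\<rho> h))"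
  unfolding unitary_rep_def mm_def cl_def matmul_def cadj_def fun_eq_iff
  by (auto simp: idm_def)


lemma mm_matmulL[simp]: "mm n (matmul n A B) D = mm n (mm n A B) D"
  by (metis mm_clL mm_def)

lemma mm_matmulR[simp]: "mm n D (matmul n A B) = mm n D (mm n A B)"
  by (metis mm_clR mm_def)

lemma mm_cadjR: "mm n A (cadj B) = mm n A (cadj (cl n B))"
  by (metis cadj_cl mm_clR)

lemma ur_unit: "unitary_rep G n \<rho> \<Longrightarrow> g \<in> carrier G \<Longrightarrow> mm n (\<rho> g) (cadj (\<rho> g)) = cl n idm"
  by (simp add: ur_iff)

lemma ur_hom: "unitary_rep G n \<rho> \<Longrightarrow> g \<in> carrier G \<Longrightarrow> h \<in> carrier G \<Longrightarrow> cl n (\<rho> (g \<otimes>\<^bsub>G\<^esub> h)) = mm n (\<rho> g) (\<rho> h)"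
  by (simp add: ur_iff)

lemma ur_one:
  assumes G: "group G" and R: "unitary_rep G n \<rho>"
  shows "cl n (\<rho> \<one>\<^bsub>G\<^esub>) = cl n idm"
proof -
  have one: "\<one>\<^bsub>G\<^esub> \<in> carrier G" using G by (simp add: group.is_monoid monoid.one_closed)
  have oo: "\<one>\<^bsub>G\<^esub> \<otimes>\<^bsub>G\<^esub> \<one>\<^bsub>G\<^esub> = \<one>\<^bsub>G\<^esub>" using G one by (simp add: group.is_monoid monoid.l_one)
  have u: "mm n (\<rho> \<one>\<^bsub>G\<^esub>) (cadj (\<rho> \<one>\<^bsub>G\<^esub>)) = cl n idm" by (rule ur_unit[OF R one])
  have h: "cl n (\<rho> \<one>\<^bsub>G\<^esub>) = mm n (\<rho> \<one>\<^bsub>G\<^esub>) (\<rho> \<one>\<^bsub>G\<^esub>)" using ur_hom[OF R one one] oo by simp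
  have "cl n (\<rho> \<one>\<^bsub>G\<^esub>) = mm n (\<rho> \<one>\<^bsub>G\<^esub>) (cl n idm)" by simp
  also have "\<dots> = mm n (\<rho> \<one>\<^bsub>G\<^esub>) (mm n (\<rho> \<one>\<^bsub>G\<^esub>) (cadj (\<rho> \<one>\<^bsub>G\<^esub>)))" by (simp only: u)
  also have "\<dots> = mm n (mm n (\<rho> \<one>\<^bsub>G\<^esub>) (\<rho> \<one>\<^bsub>G\<^esub>)) (cadj (\<rho> \<one>\<^bsub>G\<^esub>))" by (simp only: mm_assoc)
  also have "\<dots> = mm n (cl n (\<rho> \<one>\<^bsub>G\<^esub>)) (cadj (\<rho> \<one>\<^bsub>G\<^esub>))" by (simp only: h)
  also have "\<dots> = cl n idm" using u by simp
  finally show ?thesis .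
qed

lemma ur_inv:
  assumes G: "group G" and R: "unitary_rep G n \<rho>" and g: "g \<in> carrier G"
  shows "cl n (\<rho> (inv\<^bsub>G\<^esub> g)) = cl n (cadj (\<rho> g))"
proof -
  have ig: "inv\<^bsub>G\<^esub> g \<in> carrier G" using G g by (simp add: group.inv_closed)
  have ii: "inv\<^bsub>G\<^esub> g \<otimes>\<^bsub>G\<^esub> g = \<one>\<^bsub>G\<^esub>" using G g by (simp add: group.l_inv)
  have u: "mm n (\<rho> g) (cadj (\<rho> g)) = cl n idm" by (rule ur_unit[OF R g])
  have h: "mm n (\<rho> (inv\<^bsub>G\<^esub> g)) (\<rho> g) = cl n (\<rho> \<one>\<^bsub>G\<^esub>)" using ur_hom[OF R ig g] ii by simp
  have "cl n (\<rho> (inv\<^bsub>G\<^esub> g)) = mm n (\<rho> (inv\<^bsub>G\<^esub> g)) (cl n idm)" by simp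
  also have "\<dots> = mm n (\<rho> (inv\<^bsub>G\<^esub> g)) (mm n (\<rho> g) (cadj (\<rho> g)))" by (simp only: u)
  also have "\<dots> = mm n (mm n (\<rho> (inv\<^bsub>G\<^esub> g)) (\<rho> g)) (cadj (\<rho> g))" by (simp only: mm_assoc)
  also have "\<dots> = mm n (cl n idm) (cadj (\<rho> g))" by (simp only: h ur_one[OF G R])
  also have "\<dots> = cl n (cadj (\<rho> g))" by simp
  finally show ?thesis .
qed

lemma ur_bound:
  assumes R: "unitary_rep G n \<rho>" and g: "g \<in> carrier G" and i: "i < n" and j: "j < n"
  shows "norm (\<rho> g i j) \<le> 1"
proof -
  have "(\<Sum>k<n. \<rho> g i k * cnj (\<rho> g i k)) = idm i i"
    using R g i unfolding unitary_rep_def by blast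
  moreover have "complex_of_real (\<Sum>k<n. (cmod (\<rho> g i k))\<^sup>2) = (\<Sum>k<n. \<rho> g i k * cnj (\<rho> g i k))"
    by (simp add: complex_norm_square[symmetric])
  ultimately have "complex_of_real (\<Sum>k<n. (cmod (\<rho> g i k))\<^sup>2) = 1" by (simp add: idm_def)
  then have s: "(\<Sum>k<n. (cmod (\<rho> g i k))\<^sup>2) = 1"
    using of_real_eq_1_iff by blast
  have "(cmod (\<rho> g i j))\<^sup>2 \<le> (\<Sum>k<n. (cmod (\<rho> g i k))\<^sup>2)"
    using j by (intro member_le_sum) auto
  then have "(cmod (\<rho> g i j))\<^sup>2 \<le> 1" using s by simp
  then show ?thesis by (simp add: power_le_one_iff)
qed

lemma ur_idm: "unitary_rep G n (\<lambda>g. idm)"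
  unfolding ur_iff by (simp add: cadj_idm)

lemma ur_prod:
  assumes R1: "unitary_rep G n \<rho>1" and R2: "unitary_rep G n \<rho>2"
    and cm: "\<forall>g\<in>carrier G. \<forall>h\<in>carrier G. mm n (\<rho>1 g) (\<rho>2 h) = mm n (\<rho>2 h) (\<rho>1 g)"
  shows "unitary_rep G n (\<lambda>g. matmul n (\<rho>1 g) (\<rho>2 g))"
  unfolding ur_iff
proof (intro conjI ballI)
  fix g assume g: "g \<in> carrier G"
  have "mm n (matmul n (\<rho>1 g) (\<rho>2 g)) (cadj (matmul n (\<rho>1 g) (\<rho>2 g)))
      = mm n (mm n (\<rho>1 g) (\<rho>2 g)) (cadj (mm n (\<rho>1 g) (\<rho>2 g)))"
    by (simp add: mm_cadjR[of n _ "matmul n _ _"] mm_def[symmetric])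
  also have "\<dots> = mm n (\<rho>1 g) (mm n (mm n (\<rho>2 g) (cadj (\<rho>2 g))) (cadj (\<rho>1 g)))"
    by (simp only: cadj_mm mm_assoc)
  also have "\<dots> = cl n idm"
    using ur_unit[OF R1 g] ur_unit[OF R2 g] by simp
  finally show "mm n (matmul n (\<rho>1 g) (\<rho>2 g)) (cadj (matmul n (\<rho>1 g) (\<rho>2 g))) = cl n idm" .
next
  fix g h assume g: "g \<in> carrier G" and h: "h \<in> carrier G"
  have "cl n (matmul n (\<rho>1 (g \<otimes>\<^bsub>G\<^esub> h)) (\<rho>2 (g \<otimes>\<^bsub>G\<^esub> h)))
     = mm n (cl n (\<rho>1 (g \<otimes>\<^bsub>G\<^esub> h))) (cl n (\<rho>2 (g \<otimes>\<^bsub>G\<^esub> h)))"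
    by (simp add: mm_def[symmetric])
  also have "\<dots> = mm n (mm n (\<rho>1 g) (\<rho>1 h)) (mm n (\<rho>2 g) (\<rho>2 h))"
    by (simp only: ur_hom[OF R1 g h] ur_hom[OF R2 g h])
  also have "\<dots> = mm n (\<rho>1 g) (mm n (mm n (\<rho>1 h) (\<rho>2 g)) (\<rho>2 h))"
    by (simp only: mm_assoc)
  also have "\<dots> = mm n (\<rho>1 g) (mm n (mm n (\<rho>2 g) (\<rho>1 h)) (\<rho>2 h))"
    using cm g h by simp
  also have "\<dots> = mm n (matmul n (\<rho>1 g) (\<rho>2 g)) (matmul n (\<rho>1 h) (\<rho>2 h))"
    by (simp only: mm_matmulL mm_matmulR mm_assoc)
  finally show "cl n (matmul n (\<rho>1 (g \<otimes>\<^bsub>G\<^esub> h)) (\<rho>2 (g \<otimes>\<^bsub>G\<^esub> h))) =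
      mm n (matmul n (\<rho>1 g) (\<rho>2 g)) (matmul n (\<rho>1 h) (\<rho>2 h))" .
qed


section \<open>Tensor product operators\<close>

lemma cfgs_finite: "finite S \<Longrightarrow> finite (cfgs d S)"
  unfolding cfgs_def by (intro finite_PiE) auto

lemma cfgs_lt: "\<sigma> \<in> cfgs d S \<Longrightarrow> x \<in> S \<Longrightarrow> \<sigma> x < d x"
  unfolding cfgs_def by auto

lemma prod_op_supp: "supp (cfgs d S) (prod_op S d u)"
  by (simp add: supp_def prod_op_def)

lemma tensor_sum:
  assumes "finite T"
  shows "(\<Sum>b\<in>cfgs d T. \<Prod>x\<in>T. f x (b x)) = (\<Prod>x\<in>T. \<Sum>k<d x. (f x k :: complex))"
  unfolding cfgs_def by (rule prod_sum_PiE[symmetric]) (use assms in auto)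

lemma prod_op_mul:
  assumes S: "finite S"
  shows "opmul (cfgs d S) (prod_op S d u) (prod_op S d w) = prod_op S d (\<lambda>x. matmul (d x) (u x) (w x))"
proof (intro ext)
  fix \<sigma> \<tau>
  show "opmul (cfgs d S) (prod_op S d u) (prod_op S d w) \<sigma> \<tau> = prod_op S d (\<lambda>x. matmul (d x) (u x) (w x)) \<sigma> \<tau>"
  proof (cases "\<sigma> \<in> cfgs d S \<and> \<tau> \<in> cfgs d S")
    case True
    have "opmul (cfgs d S) (prod_op S d u) (prod_op S d w) \<sigma> \<tau>
        = (\<Sum>\<rho>\<in>cfgs d S. (\<Prod>x\<in>S. u x (\<sigma> x) (\<rho> x)) * (\<Prod>x\<in>S. w x (\<rho> x) (\<tau> x)))"
      using True by (auto simp: opmul_def prod_op_def intro!: sum.cong)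
    also have "\<dots> = (\<Sum>\<rho>\<in>cfgs d S. \<Prod>x\<in>S. u x (\<sigma> x) (\<rho> x) * w x (\<rho> x) (\<tau> x))"
      by (simp add: prod.distrib)
    also have "\<dots> = (\<Prod>x\<in>S. \<Sum>k<d x. u x (\<sigma> x) k * w x k (\<tau> x))"
      by (rule tensor_sum[OF S, where d=d and f="\<lambda>x k. u x (\<sigma> x) k * w x k (\<tau> x)"])
    also have "\<dots> = prod_op S d (\<lambda>x. matmul (d x) (u x) (w x)) \<sigma> \<tau>"
      using True by (simp add: prod_op_def matmul_def)
    finally show ?thesis .
  qed (auto simp: opmul_def prod_op_def)
qed

lemma prod_op_cong:
  assumes "\<forall>x\<in>S. cl (d x) (u x) = cl (d x) (w x)"
  shows "prod_op S d u = prod_op S d w"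
proof (intro ext)
  fix \<sigma> \<tau>
  have "u x (\<sigma> x) (\<tau> x) = w x (\<sigma> x) (\<tau> x)" if "\<sigma> \<in> cfgs d S" "\<tau> \<in> cfgs d S" "x \<in> S" for x
  proof -
    have "cl (d x) (u x) (\<sigma> x) (\<tau> x) = cl (d x) (w x) (\<sigma> x) (\<tau> x)" using assms that by simp
    then show ?thesis using cfgs_lt[OF that(1,3)] cfgs_lt[OF that(2,3)] by (simp add: cl_def)
  qed
  then show "prod_op S d u \<sigma> \<tau> = prod_op S d w \<sigma> \<tau>"
    by (auto simp: prod_op_def intro!: prod.cong)
qed

lemma prod_op_idm: "finite S \<Longrightarrow> prod_op S d (\<lambda>x. idm) = opid (cfgs d S)"
proof (intro ext)
  fix \<sigma> \<tau> assume fS: "finite S"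
  show "prod_op S d (\<lambda>x. idm) \<sigma> \<tau> = opid (cfgs d S) \<sigma> \<tau>"
  proof (cases "\<sigma> \<in> cfgs d S \<and> \<tau> \<in> cfgs d S")
    case True
    have "(\<Prod>x\<in>S. idm (\<sigma> x) (\<tau> x)) = (if \<forall>x\<in>S. \<sigma> x = \<tau> x then 1 else 0)"
    proof (cases "\<forall>x\<in>S. \<sigma> x = \<tau> x")
      case True then show ?thesis by (simp add: idm_def)
    next
      case False
      then obtain x where "x \<in> S" "\<sigma> x \<noteq> \<tau> x" by blast
      then have "idm (\<sigma> x) (\<tau> x) = 0" by (simp add: idm_def)
      then have "(\<Prod>x\<in>S. idm (\<sigma> x) (\<tau> x)) = 0"
        using \<open>x \<in> S\<close> fS by (intro prod_zero) auto
      then show ?thesis using False by simp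
    qed
    moreover have "(\<forall>x\<in>S. \<sigma> x = \<tau> x) \<longleftrightarrow> \<sigma> = \<tau>"
    proof
      assume "\<forall>x\<in>S. \<sigma> x = \<tau> x"
      then show "\<sigma> = \<tau>" using True unfolding cfgs_def by (intro PiE_ext[of \<sigma> S _ \<tau>]) auto
    qed simp
    ultimately show ?thesis using True by (simp add: prod_op_def opid_def)
  qed (auto simp: prod_op_def opid_def)
qed

lemma prod_op_adj: "adjop (prod_op S d u) = prod_op S d (\<lambda>x. cadj (u x))"
  by (auto simp: adjop_def prod_op_def cadj_def cnj_prod intro!: ext)

lemma prod_op_bound:
  assumes "\<forall>x\<in>S. \<forall>i<d x. \<forall>j<d x. norm (u x i j) \<le> 1"
  shows "norm (prod_op S d u \<sigma> \<tau>) \<le> 1"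
proof (cases "\<sigma> \<in> cfgs d S \<and> \<tau> \<in> cfgs d S")
  case True
  have "norm (\<Prod>x\<in>S. u x (\<sigma> x) (\<tau> x)) = (\<Prod>x\<in>S. norm (u x (\<sigma> x) (\<tau> x)))"
    by (rule prod_norm[symmetric])
  also have "\<dots> \<le> 1"
  proof (intro prod_le_1 conjI)
    fix x assume x: "x \<in> S"
    show "norm (u x (\<sigma> x) (\<tau> x)) \<le> 1"
      using assms x cfgs_lt[OF _ x, of \<sigma> d] cfgs_lt[OF _ x, of \<tau> d] True by blast
  qed simp
  finally show ?thesis using True by (simp add: prod_op_def)
qed (auto simp: prod_op_def)


section \<open>Region operators\<close>

definition Gf :: "('x \<Rightarrow> nat) \<Rightarrow> 'x set \<Rightarrow> 'x set \<Rightarrow> ('x cfg \<Rightarrow> 'x cfg \<Rightarrow> complex) \<Rightarrow>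
    ('x cfg \<Rightarrow> 'x cfg \<Rightarrow> complex) \<Rightarrow> 'x op" where
  "Gf d S r Ob W = (\<lambda>\<sigma> \<tau>. if \<sigma> \<in> cfgs d S \<and> \<tau> \<in> cfgs d S
      then Ob (restrict \<sigma> r) (restrict \<tau> r) * W (restrict \<sigma> (S - r)) (restrict \<tau> (S - r)) else 0)"

definition dlt :: "'x cfg \<Rightarrow> 'x cfg \<Rightarrow> complex" where
  "dlt a b = (if a = b then 1 else 0)"

lemma sub_alg_Gf: "sub_alg d S r = {Gf d S r Ob dlt | Ob. True}"
  unfolding sub_alg_def Gf_def dlt_def by (rule refl)

lemma restrict_cfgs: "\<sigma> \<in> cfgs d S \<Longrightarrow> r \<subseteq> S \<Longrightarrow> restrict \<sigma> r \<in> cfgs d r"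
  unfolding cfgs_def by auto

lemma split_bij:
  assumes r: "r \<subseteq> S"
  shows "bij_betw (\<lambda>\<rho>. (restrict \<rho> r, restrict \<rho> (S - r))) (cfgs d S) (cfgs d r \<times> cfgs d (S - r))"
proof (rule bij_betwI[where g="\<lambda>p x. if x \<in> r then fst p x else snd p x"])
  show "(\<lambda>\<rho>. (restrict \<rho> r, restrict \<rho> (S - r))) \<in> cfgs d S \<rightarrow> cfgs d r \<times> cfgs d (S - r)"
    using r by (auto simp: cfgs_def)
  show "(\<lambda>p x. if x \<in> r then fst p x else snd p x) \<in> cfgs d r \<times> cfgs d (S - r) \<rightarrow> cfgs d S"
    using r by (auto simp: cfgs_def PiE_def Pi_def extensional_def)
  fix \<rho> assume "\<rho> \<in> cfgs d S"
  then show "(\<lambda>x. if x \<in> r then fst (restrict \<rho> r, restrict \<rho> (S - r)) x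
      else snd (restrict \<rho> r, restrict \<rho> (S - r)) x) = \<rho>"
    using r by (auto simp: cfgs_def PiE_def extensional_def fun_eq_iff)
next
  fix p assume "p \<in> cfgs d r \<times> cfgs d (S - r)"
  then show "(restrict (\<lambda>x. if x \<in> r then fst p x else snd p x) r,
      restrict (\<lambda>x. if x \<in> r then fst p x else snd p x) (S - r)) = p"
    by (cases p) (auto simp: cfgs_def PiE_def extensional_def fun_eq_iff)
qed

lemma Gf_mul:
  assumes S: "finite S" and r: "r \<subseteq> S"
  shows "opmul (cfgs d S) (Gf d S r Ob1 W1) (Gf d S r Ob2 W2) =
    Gf d S r (\<lambda>a b. \<Sum>c\<in>cfgs d r. Ob1 a c * Ob2 c b) (\<lambda>a b. \<Sum>c\<in>cfgs d (S - r). W1 a c * W2 c b)"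
proof (intro ext)
  fix \<sigma> \<tau>
  show "opmul (cfgs d S) (Gf d S r Ob1 W1) (Gf d S r Ob2 W2) \<sigma> \<tau> =
    Gf d S r (\<lambda>a b. \<Sum>c\<in>cfgs d r. Ob1 a c * Ob2 c b) (\<lambda>a b. \<Sum>c\<in>cfgs d (S - r). W1 a c * W2 c b) \<sigma> \<tau>"
  proof (cases "\<sigma> \<in> cfgs d S \<and> \<tau> \<in> cfgs d S")
    case True
    define f where "f = (\<lambda>p. Ob1 (restrict \<sigma> r) (fst p) * W1 (restrict \<sigma> (S - r)) (snd p) *
        (Ob2 (fst p) (restrict \<tau> r) * W2 (snd p) (restrict \<tau> (S - r))))"
    have "opmul (cfgs d S) (Gf d S r Ob1 W1) (Gf d S r Ob2 W2) \<sigma> \<tau>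
        = (\<Sum>\<rho>\<in>cfgs d S. f (restrict \<rho> r, restrict \<rho> (S - r)))"
      using True by (auto simp: opmul_def Gf_def f_def intro!: sum.cong)
    also have "\<dots> = (\<Sum>p\<in>cfgs d r \<times> cfgs d (S - r). f p)"
      by (rule sum.reindex_bij_betw[OF split_bij[OF r]])
    also have "\<dots> = (\<Sum>a\<in>cfgs d r. \<Sum>b\<in>cfgs d (S - r). f (a, b))"
      by (simp add: sum.cartesian_product split_beta)
    also have "\<dots> = (\<Sum>a\<in>cfgs d r. \<Sum>b\<in>cfgs d (S - r).
        (Ob1 (restrict \<sigma> r) a * Ob2 a (restrict \<tau> r)) * (W1 (restrict \<sigma> (S - r)) b * W2 b (restrict \<tau> (S - r))))"
      by (simp add: f_def mult_ac)
    also have "\<dots> = (\<Sum>a\<in>cfgs d r. Ob1 (restrict \<sigma> r) a * Ob2 a (restrict \<tau> r)) *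
        (\<Sum>b\<in>cfgs d (S - r). W1 (restrict \<sigma> (S - r)) b * W2 b (restrict \<tau> (S - r)))"
      by (rule sum_product[symmetric])
    also have "\<dots> = Gf d S r (\<lambda>a b. \<Sum>c\<in>cfgs d r. Ob1 a c * Ob2 c b) (\<lambda>a b. \<Sum>c\<in>cfgs d (S - r). W1 a c * W2 c b) \<sigma> \<tau>"
      using True by (simp add: Gf_def)
    finally show ?thesis .
  qed (auto simp: opmul_def Gf_def)
qed

lemma prod_op_Gf:
  assumes S: "finite S" and r: "r \<subseteq> S"
  shows "prod_op S d u = Gf d S r (\<lambda>a b. \<Prod>x\<in>r. u x (a x) (b x)) (\<lambda>a b. \<Prod>x\<in>S - r. u x (a x) (b x))"
proof (intro ext)
  fix \<sigma> \<tau>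
  have fr: "finite r" using S r finite_subset by blast
  have "(\<Prod>x\<in>S. u x (\<sigma> x) (\<tau> x)) = (\<Prod>x\<in>r. u x (\<sigma> x) (\<tau> x)) * (\<Prod>x\<in>S - r. u x (\<sigma> x) (\<tau> x))"
  proof -
    have "S = r \<union> (S - r)" using r by blast
    then have "(\<Prod>x\<in>S. u x (\<sigma> x) (\<tau> x)) = (\<Prod>x\<in>r \<union> (S - r). u x (\<sigma> x) (\<tau> x))" by simp
    also have "\<dots> = (\<Prod>x\<in>r. u x (\<sigma> x) (\<tau> x)) * (\<Prod>x\<in>S - r. u x (\<sigma> x) (\<tau> x))"
      by (rule prod.union_disjoint) (use fr S in auto)
    finally show ?thesis .
  qed
  moreover have "(\<Prod>x\<in>r. u x (restrict \<sigma> r x) (restrict \<tau> r x)) = (\<Prod>x\<in>r. u x (\<sigma> x) (\<tau> x))"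
    by (rule prod.cong) auto
  moreover have "(\<Prod>x\<in>S - r. u x (restrict \<sigma> (S - r) x) (restrict \<tau> (S - r) x)) = (\<Prod>x\<in>S - r. u x (\<sigma> x) (\<tau> x))"
    by (rule prod.cong) auto
  ultimately show "prod_op S d u \<sigma> \<tau> = Gf d S r (\<lambda>a b. \<Prod>x\<in>r. u x (a x) (b x)) (\<lambda>a b. \<Prod>x\<in>S - r. u x (a x) (b x)) \<sigma> \<tau>"
    by (simp add: prod_op_def Gf_def)
qed

lemma Gf_congW:
  assumes "r \<subseteq> S" "\<forall>a\<in>cfgs d (S - r). \<forall>b\<in>cfgs d (S - r). W a b = W' a b"
  shows "Gf d S r Ob W = Gf d S r Ob W'"
proof -
  have "S - r \<subseteq> S" by blast
  then show ?thesis using assms(2) restrict_cfgs[of _ d S "S - r"] by (auto simp: Gf_def intro!: ext)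
qed

lemma sandwich_Gf:
  assumes S: "finite S" and r: "r \<subseteq> S"
    and uw: "\<forall>x\<in>S - r. cl (d x) (matmul (d x) (u x) (w x)) = cl (d x) idm"
  shows "opmul (cfgs d S) (opmul (cfgs d S) (prod_op S d u) (Gf d S r Ob dlt)) (prod_op S d w) =
    Gf d S r (\<lambda>a b. \<Sum>c\<in>cfgs d r. (\<Sum>c'\<in>cfgs d r. (\<Prod>x\<in>r. u x (a x) (c' x)) * Ob c' c) * (\<Prod>x\<in>r. w x (c x) (b x))) dlt"
proof -
  let ?T = "S - r"
  have fT: "finite ?T" using S by blast
  have "opmul (cfgs d S) (opmul (cfgs d S) (prod_op S d u) (Gf d S r Ob dlt)) (prod_op S d w) =
    Gf d S r (\<lambda>a b. \<Sum>c\<in>cfgs d r. (\<Sum>c'\<in>cfgs d r. (\<Prod>x\<in>r. u x (a x) (c' x)) * Ob c' c) * (\<Prod>x\<in>r. w x (c x) (b x)))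
      (\<lambda>a b. \<Sum>c\<in>cfgs d ?T. (\<Sum>c'\<in>cfgs d ?T. (\<Prod>x\<in>?T. u x (a x) (c' x)) * dlt c' c) * (\<Prod>x\<in>?T. w x (c x) (b x)))"
    by (simp only: prod_op_Gf[OF S r] Gf_mul[OF S r])
  also have "\<dots> = Gf d S r (\<lambda>a b. \<Sum>c\<in>cfgs d r. (\<Sum>c'\<in>cfgs d r. (\<Prod>x\<in>r. u x (a x) (c' x)) * Ob c' c) * (\<Prod>x\<in>r. w x (c x) (b x))) dlt"
  proof (rule Gf_congW[OF r], intro ballI)
    fix a b assume a: "a \<in> cfgs d ?T" and b: "b \<in> cfgs d ?T"
    have fC: "finite (cfgs d ?T)" by (rule cfgs_finite[OF fT])
    have inner: "(\<Sum>c'\<in>cfgs d ?T. (\<Prod>x\<in>?T. u x (a x) (c' x)) * dlt c' c) = (\<Prod>x\<in>?T. u x (a x) (c x))"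
      if c: "c \<in> cfgs d ?T" for c
      using delta_sum2[OF fC c, of "\<lambda>c'. \<Prod>x\<in>?T. u x (a x) (c' x)"] by (simp add: dlt_def)
    have "(\<Sum>c\<in>cfgs d ?T. (\<Sum>c'\<in>cfgs d ?T. (\<Prod>x\<in>?T. u x (a x) (c' x)) * dlt c' c) * (\<Prod>x\<in>?T. w x (c x) (b x)))
        = (\<Sum>c\<in>cfgs d ?T. (\<Prod>x\<in>?T. u x (a x) (c x)) * (\<Prod>x\<in>?T. w x (c x) (b x)))"
      by (rule sum.cong) (simp_all add: inner)
    also have "\<dots> = (\<Sum>c\<in>cfgs d ?T. \<Prod>x\<in>?T. u x (a x) (c x) * w x (c x) (b x))"
      by (simp add: prod.distrib)
    also have "\<dots> = (\<Prod>x\<in>?T. \<Sum>k<d x. u x (a x) k * w x k (b x))"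
      by (rule tensor_sum[OF fT, where d=d and f="\<lambda>x k. u x (a x) k * w x k (b x)"])
    also have "\<dots> = prod_op ?T d (\<lambda>x. matmul (d x) (u x) (w x)) a b"
      using a b by (simp add: prod_op_def matmul_def)
    also have "\<dots> = prod_op ?T d (\<lambda>x. idm) a b"
      using prod_op_cong[of "S - r" d "\<lambda>x. matmul (d x) (u x) (w x)" "\<lambda>x. idm"] uw by simp
    also have "\<dots> = dlt a b"
      using a b by (simp add: prod_op_idm[OF fT] opid_def dlt_def)
    finally show "(\<Sum>c\<in>cfgs d ?T. (\<Sum>c'\<in>cfgs d ?T. (\<Prod>x\<in>?T. u x (a x) (c' x)) * dlt c' c) * (\<Prod>x\<in>?T. w x (c x) (b x)))
        = dlt a b" .
  qed
  finally show ?thesis .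
qed

lemma intop_Gf:
  assumes "\<And>g. g \<in> space M \<Longrightarrow> F g = Gf d S r (Og g) dlt"
  shows "intop M F = Gf d S r (\<lambda>a b. LINT g|M. Og g a b) dlt"
proof -
  have "intop M F = intop M (\<lambda>g. Gf d S r (Og g) dlt)" by (rule intop_cong) (rule assms)
  also have "\<dots> = Gf d S r (\<lambda>a b. LINT g|M. Og g a b) dlt"
    by (auto simp: intop_def Gf_def intro!: ext)
  finally show ?thesis .
qed


section \<open>Gauge setup\<close>

lemma mm_comm4:
  assumes "mm n A1 A2 = mm n A2 A1" "mm n A1 B2 = mm n B2 A1" "mm n B1 A2 = mm n A2 B1" "mm n B1 B2 = mm n B2 B1"
  shows "mm n (mm n A1 B1) (mm n A2 B2) = mm n (mm n A2 B2) (mm n A1 B1)"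
proof -
  have "mm n (mm n A1 B1) (mm n A2 B2) = mm n A1 (mm n (mm n B1 A2) B2)" by (simp only: mm_assoc)
  also have "\<dots> = mm n (mm n A1 A2) (mm n B1 B2)" by (simp only: assms(3) mm_assoc)
  also have "\<dots> = mm n (mm n A2 A1) (mm n B2 B1)" by (simp only: assms(1) assms(4))
  also have "\<dots> = mm n A2 (mm n (mm n A1 B2) B1)" by (simp only: mm_assoc)
  also have "\<dots> = mm n (mm n A2 B2) (mm n A1 B1)" by (simp only: assms(2) mm_assoc)
  finally show ?thesis .
qed

lemma mm_idm_comm: "mm n idm A = mm n A idm"
  by simp

locale gsetup =
  fixes \<Lambda> :: "('v, 'e) pre_digraph" and G :: "('g, 'b) monoid_scheme" and M :: "'g measure"
    and d :: "'v + 'e \<Rightarrow> nat" and U :: "'v \<Rightarrow> 'g \<Rightarrow> cmat"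
    and L R :: "'e \<Rightarrow> 'g \<Rightarrow> cmat" and r :: "('v + 'e) set"
  assumes graph: "fin_digraph \<Lambda>"
    and grp: "group G"
    and haar_prob: "prob_space M" and haar_space: "space M = carrier G"
    and haar_left: "\<forall>g\<in>carrier G. (\<lambda>h. g \<otimes>\<^bsub>G\<^esub> h) \<in> M \<rightarrow>\<^sub>M M \<and> distr M M (\<lambda>h. g \<otimes>\<^bsub>G\<^esub> h) = M"
    and haar_right: "\<forall>g\<in>carrier G. (\<lambda>h. h \<otimes>\<^bsub>G\<^esub> g) \<in> M \<rightarrow>\<^sub>M M \<and> distr M M (\<lambda>h. h \<otimes>\<^bsub>G\<^esub> g) = M"
    and U_rep: "\<forall>v\<in>verts \<Lambda>. unitary_rep G (d (Inl v)) (U v)"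
    and L_rep: "\<forall>e\<in>arcs \<Lambda>. unitary_rep G (d (Inr e)) (L e)"
    and R_rep: "\<forall>e\<in>arcs \<Lambda>. unitary_rep G (d (Inr e)) (\<lambda>g. R e (inv\<^bsub>G\<^esub> g))"
    and LR_comm: "\<forall>e\<in>arcs \<Lambda>. \<forall>g\<in>carrier G. \<forall>h\<in>carrier G. \<forall>i<d (Inr e). \<forall>j<d (Inr e).
                    matmul (d (Inr e)) (L e g) (R e h) i j = matmul (d (Inr e)) (R e h) (L e g) i j"
    and U_meas: "\<forall>v\<in>verts \<Lambda>. \<forall>i j. (\<lambda>g. U v g i j) \<in> borel_measurable M"
    and L_meas: "\<forall>e\<in>arcs \<Lambda>. \<forall>i j. (\<lambda>g. L e g i j) \<in> borel_measurable M"
    and R_meas: "\<forall>e\<in>arcs \<Lambda>. \<forall>i j. (\<lambda>g. R e (inv\<^bsub>G\<^esub> g) i j) \<in> borel_measurable M"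
    and region: "r \<subseteq> sites \<Lambda>"
begin

abbreviation "S \<equiv> sites \<Lambda>"
abbreviation "C \<equiv> cfgs d (sites \<Lambda>)"
abbreviation "gs v g x \<equiv> gauge_site \<Lambda> G d U L R v g x"
abbreviation "Ag v \<equiv> gauge_op \<Lambda> G d U L R v"

lemma finS: "finite S"
proof -
  interpret fin_digraph \<Lambda> by (rule graph)
  show ?thesis unfolding sites_def by simp
qed

lemma finC: "finite C" by (rule cfgs_finite[OF finS])

lemma inv_car: "g \<in> carrier G \<Longrightarrow> inv\<^bsub>G\<^esub> g \<in> carrier G"
  using grp by (simp add: group.inv_closed)

lemma LRc:
  assumes e: "e \<in> arcs \<Lambda>" and g: "g \<in> carrier G" and h: "h \<in> carrier G"
  shows "mm (d (Inr e)) (L e g) (R e (inv\<^bsub>G\<^esub> h)) = mm (d (Inr e)) (R e (inv\<^bsub>G\<^esub> h)) (L e g)"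
  using LR_comm e g inv_car[OF h] unfolding mm_def cl_def fun_eq_iff by auto

lemma site_rep:
  assumes v: "v \<in> verts \<Lambda>" and x: "x \<in> S"
  shows "unitary_rep G (d x) (\<lambda>g. gs v g x)"
proof (cases x)
  case (Inl w)
  show ?thesis
  proof (cases "w = v")
    case True
    then have "(\<lambda>g. gs v g x) = U v" using Inl by (simp add: gauge_site_def fun_eq_iff)
    then show ?thesis using U_rep v Inl True by simp
  next
    case False
    then have "(\<lambda>g. gs v g x) = (\<lambda>g. idm)" using Inl by (simp add: gauge_site_def fun_eq_iff)
    then show ?thesis by (simp add: ur_idm)
  qed
next
  case (Inr e)
  have e: "e \<in> arcs \<Lambda>" using x Inr by (auto simp: sites_def)
  define n where "n = d (Inr e)"
  define \<rho>1 where "\<rho>1 = (\<lambda>g. if tail \<Lambda> e = v then L e g else idm)"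
  define \<rho>2 where "\<rho>2 = (\<lambda>g. if head \<Lambda> e = v then R e (inv\<^bsub>G\<^esub> g) else idm)"
  have eq: "(\<lambda>g. gs v g x) = (\<lambda>g. matmul n (\<rho>1 g) (\<rho>2 g))"
    using Inr by (simp add: gauge_site_def fun_eq_iff \<rho>1_def \<rho>2_def n_def)
  have r1: "unitary_rep G n \<rho>1"
    unfolding \<rho>1_def n_def using L_rep e by (cases "tail \<Lambda> e = v") (simp_all add: ur_idm)
  have r2: "unitary_rep G n \<rho>2"
    unfolding \<rho>2_def n_def using R_rep e by (cases "head \<Lambda> e = v") (simp_all add: ur_idm)
  have cm: "\<forall>g\<in>carrier G. \<forall>h\<in>carrier G. mm n (\<rho>1 g) (\<rho>2 h) = mm n (\<rho>2 h) (\<rho>1 g)"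
    unfolding \<rho>1_def \<rho>2_def n_def using LRc[OF e] by auto
  show ?thesis unfolding eq n_def[symmetric] using Inr n_def ur_prod[OF r1 r2 cm] by simp
qed

lemma site_comm:
  assumes v: "v \<in> verts \<Lambda>" and w: "w \<in> verts \<Lambda>" and vw: "v \<noteq> w" and x: "x \<in> S"
    and g: "g \<in> carrier G" and h: "h \<in> carrier G"
  shows "mm (d x) (gs v g x) (gs w h x) = mm (d x) (gs w h x) (gs v g x)"
proof (cases x)
  case (Inl y)
  then show ?thesis using vw by (auto simp: gauge_site_def)
next
  case (Inr e)
  have e: "e \<in> arcs \<Lambda>" using x Inr by (auto simp: sites_def)
  define n where "n = d (Inr e)"
  define A1 where "A1 = (if tail \<Lambda> e = v then L e g else idm)"
  define B1 where "B1 = (if head \<Lambda> e = v then R e (inv\<^bsub>G\<^esub> g) else idm)"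
  define A2 where "A2 = (if tail \<Lambda> e = w then L e h else idm)"
  define B2 where "B2 = (if head \<Lambda> e = w then R e (inv\<^bsub>G\<^esub> h) else idm)"
  have e1: "gs v g x = matmul n A1 B1" using Inr by (simp add: gauge_site_def A1_def B1_def n_def)
  have e2: "gs w h x = matmul n A2 B2" using Inr by (simp add: gauge_site_def A2_def B2_def n_def)
  have c1: "mm n A1 A2 = mm n A2 A1" unfolding A1_def A2_def using vw by auto
  have c2: "mm n A1 B2 = mm n B2 A1" unfolding A1_def B2_def n_def using LRc[OF e g h] by auto
  have c3: "mm n B1 A2 = mm n A2 B1" unfolding B1_def A2_def n_def using LRc[OF e h g] by auto
  have c4: "mm n B1 B2 = mm n B2 B1" unfolding B1_def B2_def using vw by auto
  have "mm n (matmul n A1 B1) (matmul n A2 B2) = mm n (matmul n A2 B2) (matmul n A1 B1)"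
    using mm_comm4[OF c1 c2 c3 c4] by simp
  then show ?thesis using e1 e2 Inr n_def by simp
qed

end


context gsetup begin

lemma site_meas:
  assumes v: "v \<in> verts \<Lambda>" and x: "x \<in> S"
  shows "(\<lambda>g. gs v g x i j) \<in> borel_measurable M"
proof (cases x)
  case (Inl w)
  have w: "w \<in> verts \<Lambda>" using x Inl by (auto simp: sites_def)
  show ?thesis
    using Inl U_meas w by (cases "w = v") (simp_all add: gauge_site_def)
next
  case (Inr e)
  have e: "e \<in> arcs \<Lambda>" using x Inr by (auto simp: sites_def)
  have [measurable]: "\<And>i j. (\<lambda>g. L e g i j) \<in> borel_measurable M" using L_meas e by blast
  have [measurable]: "\<And>i j. (\<lambda>g. R e (inv\<^bsub>G\<^esub> g) i j) \<in> borel_measurable M" using R_meas e by blast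
  show ?thesis
    using Inr by (cases "tail \<Lambda> e = v"; cases "head \<Lambda> e = v") (simp_all add: gauge_site_def matmul_def)
qed

lemma Ag_good: "v \<in> verts \<Lambda> \<Longrightarrow> good C M (Ag v)"
proof -
  assume v: "v \<in> verts \<Lambda>"
  have [measurable]: "\<And>x i j. x \<in> S \<Longrightarrow> (\<lambda>g. gs v g x i j) \<in> borel_measurable M"
    using site_meas[OF v] by blast
  have m: "(\<lambda>g. Ag v g \<sigma> \<tau>) \<in> borel_measurable M" for \<sigma> \<tau>
    unfolding gauge_op_def prod_op_def by measurable
  have b: "norm (Ag v g \<sigma> \<tau>) \<le> 1" if "g \<in> space M" for g \<sigma> \<tau>
    unfolding gauge_op_def
    by (rule prod_op_bound) (use ur_bound[OF site_rep[OF v]] that haar_space in auto)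
  show ?thesis unfolding good_def using m b by (auto intro!: exI[of _ 1])
qed

lemma Ag_hom:
  assumes v: "v \<in> verts \<Lambda>" and g: "g \<in> carrier G" and h: "h \<in> carrier G"
  shows "opmul C (Ag v g) (Ag v h) = Ag v (g \<otimes>\<^bsub>G\<^esub> h)"
  unfolding gauge_op_def prod_op_mul[OF finS]
proof (rule prod_op_cong, intro ballI)
  fix x assume x: "x \<in> S"
  show "cl (d x) (matmul (d x) (gs v g x) (gs v h x)) = cl (d x) (gs v (g \<otimes>\<^bsub>G\<^esub> h) x)"
    using ur_hom[OF site_rep[OF v x] g h] by (simp add: mm_def)
qed

lemma Ag_adj:
  assumes v: "v \<in> verts \<Lambda>" and g: "g \<in> carrier G"
  shows "Ag v (inv\<^bsub>G\<^esub> g) = adjop (Ag v g)"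
  unfolding gauge_op_def prod_op_adj
  by (rule prod_op_cong) (use ur_inv[OF grp site_rep[OF v] g] in auto)

lemma Ag_comm:
  assumes v: "v \<in> verts \<Lambda>" and w: "w \<in> verts \<Lambda>" and vw: "v \<noteq> w"
    and g: "g \<in> carrier G" and h: "h \<in> carrier G"
  shows "opmul C (Ag v g) (Ag w h) = opmul C (Ag w h) (Ag v g)"
  unfolding gauge_op_def prod_op_mul[OF finS]
proof (rule prod_op_cong, intro ballI)
  fix x assume x: "x \<in> S"
  show "cl (d x) (matmul (d x) (gs v g x) (gs w h x)) = cl (d x) (matmul (d x) (gs w h x) (gs v g x))"
    using site_comm[OF v w vw x g h] by (simp add: mm_def)
qed

lemma haar: "v \<in> verts \<Lambda> \<Longrightarrow> haarfam C G M (Ag v)"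
  unfolding haarfam_def
  using finC grp haar_prob haar_space haar_left haar_right Ag_hom Ag_adj Ag_good by blast

lemma Pv_eq: "v \<in> verts \<Lambda> \<Longrightarrow> Pi_v \<Lambda> G M d U L R v = haarfam.P M (Ag v)"
  by (simp add: haarfam.P_def[OF haar] Pi_v_def intop_def)

end


lemma Gf_supp: "supp (cfgs d S) (Gf d S r Ob W)"
  by (simp add: supp_def Gf_def)

context gsetup begin

abbreviation "Pv \<equiv> Pi_v \<Lambda> G M d U L R"
abbreviation "Ar \<equiv> sub_alg d (sites \<Lambda>) r"

definition TwW where
  "TwW w X = intop M (\<lambda>g. opmul C (opmul C (Ag w g) X) (adjop (Ag w g)))"

lemma Tw_eq: "w \<in> verts \<Lambda> \<Longrightarrow> haarfam.Tw C M (Ag w) X = TwW w X"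
  by (simp add: haarfam.Tw_def[OF haar] TwW_def)

lemma Ar_supp: "X \<in> Ar \<Longrightarrow> supp C X"
  unfolding sub_alg_Gf using Gf_supp by blast

lemma Pv_supp: "v \<in> verts \<Lambda> \<Longrightarrow> supp C (Pv v)"
proof -
  have "Pv v = intop M (Ag v)" by (simp add: Pi_v_def intop_def)
  then show ?thesis using supp_intop[of C "Ag v" M] prod_op_supp unfolding gauge_op_def by metis
qed

lemma Pv_idem: "v \<in> verts \<Lambda> \<Longrightarrow> opmul C (Pv v) (Pv v) = Pv v"
  using haarfam.PP[OF haar] Pv_eq by metis

lemma Pv_Ag:
  assumes v: "v \<in> verts \<Lambda>" and w: "w \<in> verts \<Lambda>" and vw: "v \<noteq> w" and g: "g \<in> carrier G"
  shows "opmul C (Pv w) (Ag v g) = opmul C (Ag v g) (Pv w)"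
proof -
  have "\<forall>h\<in>carrier G. opmul C (Ag w h) (Ag v g) = opmul C (Ag v g) (Ag w h)"
    using Ag_comm[OF v w vw g] by metis
  then show ?thesis using haarfam.P_comm[OF haar[OF w]] Pv_eq[OF w] by metis
qed

lemma Pv_comm:
  assumes v: "v \<in> verts \<Lambda>" and w: "w \<in> verts \<Lambda>"
  shows "opmul C (Pv v) (Pv w) = opmul C (Pv w) (Pv v)"
proof (cases "v = w")
  case False
  have "\<forall>g\<in>carrier G. opmul C (Ag v g) (Pv w) = opmul C (Pv w) (Ag v g)"
    using Pv_Ag[OF v w False] by metis
  then show ?thesis using haarfam.P_comm[OF haar[OF v]] Pv_eq[OF v] by metis
qed simp

lemma commfam_V: "commfam C Pv (verts \<Lambda>)"
  unfolding commfam_def using Pv_comm by blast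

lemma site_unit:
  assumes w: "w \<in> verts \<Lambda>" and g: "g \<in> carrier G" and x: "x \<in> S"
  shows "cl (d x) (matmul (d x) (gs w g x) (gs w (inv\<^bsub>G\<^esub> g) x)) = cl (d x) idm"
proof -
  have "cl (d x) (matmul (d x) (gs w g x) (gs w (inv\<^bsub>G\<^esub> g) x)) = mm (d x) (gs w g x) (gs w (inv\<^bsub>G\<^esub> g) x)"
    by (simp add: mm_def)
  also have "\<dots> = cl (d x) (gs w (g \<otimes>\<^bsub>G\<^esub> inv\<^bsub>G\<^esub> g) x)"
    using ur_hom[OF site_rep[OF w x] g inv_car[OF g]] by simp
  also have "g \<otimes>\<^bsub>G\<^esub> inv\<^bsub>G\<^esub> g = \<one>\<^bsub>G\<^esub>" using grp g by (simp add: group.r_inv)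
  also have "cl (d x) (gs w \<one>\<^bsub>G\<^esub> x) = cl (d x) idm" by (rule ur_one[OF grp site_rep[OF w x]])
  finally show ?thesis .
qed

lemma TwW_Ar:
  assumes w: "w \<in> verts \<Lambda>" and X: "X \<in> Ar"
  shows "TwW w X \<in> Ar"
proof -
  obtain Ob where Xe: "X = Gf d S r Ob dlt" using X unfolding sub_alg_Gf by blast
  define Og where "Og = (\<lambda>g a b. \<Sum>c\<in>cfgs d r. (\<Sum>c'\<in>cfgs d r. (\<Prod>x\<in>r. gs w g x (a x) (c' x)) * Ob c' c) *
      (\<Prod>x\<in>r. gs w (inv\<^bsub>G\<^esub> g) x (c x) (b x)))"
  have "TwW w X = Gf d S r (\<lambda>a b. LINT g|M. Og g a b) dlt"
    unfolding TwW_def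
  proof (rule intop_Gf)
    fix g assume "g \<in> space M"
    then have g: "g \<in> carrier G" using haar_space by simp
    have "opmul C (opmul C (Ag w g) X) (adjop (Ag w g)) = opmul C (opmul C (Ag w g) X) (Ag w (inv\<^bsub>G\<^esub> g))"
      using Ag_adj[OF w g] by simp
    also have "\<dots> = Gf d S r (Og g) dlt"
      unfolding gauge_op_def Xe Og_def
      by (rule sandwich_Gf[OF finS region]) (use site_unit[OF w g] in blast)
    finally show "opmul C (opmul C (Ag w g) X) (adjop (Ag w g)) = Gf d S r (Og g) dlt" .
  qed
  then show ?thesis unfolding sub_alg_Gf by blast
qed

lemma TwW_supp: "supp C (TwW w X)"
  unfolding TwW_def by (rule supp_intop) (simp add: opmul_supp)

lemma twirl_ind:
  assumes X: "X \<in> Ar"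
  shows "finite W \<Longrightarrow> W \<subseteq> verts \<Lambda> \<Longrightarrow> \<exists>Y\<in>Ar. (\<forall>w\<in>W. opmul C (Pv w) Y = opmul C Y (Pv w)) \<and>
    opmul C (opmul C (opprod C Pv W) Y) (opprod C Pv W) = opmul C (opmul C (opprod C Pv W) X) (opprod C Pv W)"
proof (induction W rule: finite_induct)
  case empty then show ?case using X by blast
next
  case (insert w W)
  have wv: "w \<in> verts \<Lambda>" and Wv: "W \<subseteq> verts \<Lambda>" using insert.prems by auto
  obtain Y' where Y': "Y' \<in> Ar" "\<forall>w'\<in>W. opmul C (Pv w') Y' = opmul C Y' (Pv w')"
    and k3: "opmul C (opmul C (opprod C Pv W) Y') (opprod C Pv W) = opmul C (opmul C (opprod C Pv W) X) (opprod C Pv W)"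
    using insert.IH Wv by blast
  interpret H: haarfam C G M "Ag w" by (rule haar[OF wv])
  define Y where "Y = TwW w Y'"
  define Pw where "Pw = Pv w"
  define Q where "Q = opprod C Pv W"
  have PwP: "Pw = H.P" unfolding Pw_def by (rule Pv_eq[OF wv])
  have TwY: "H.Tw Y' = Y" unfolding Y_def by (rule Tw_eq[OF wv])
  have YA: "Y \<in> Ar" unfolding Y_def by (rule TwW_Ar[OF wv Y'(1)])
  have cfI: "commfam C Pv (insert w W)" using commfam_mono[OF commfam_V insert.prems] .
  have cfW: "commfam C Pv W" using commfam_mono[OF commfam_V Wv] .
  have e1: "opprod C Pv (insert w W) = opmul C Pw Q"
    unfolding Pw_def Q_def by (rule opprod_insert[OF insert.hyps cfI])
  have k1: "opmul C Q Pw = opmul C Pw Q"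
  proof -
    have "\<forall>i\<in>W. opmul C Pw (Pv i) = opmul C (Pv i) Pw"
      unfolding Pw_def using Pv_comm wv Wv by blast
    then show ?thesis unfolding Q_def
      using opprod_comm[OF finC Pv_supp[OF wv] insert.hyps(1) cfW] Pw_def by metis
  qed
  have k2: "opmul C (opmul C Pw Y) Pw = opmul C (opmul C Pw Y') Pw"
    unfolding PwP TwY[symmetric] by (rule H.Tw_PXP)
  have cPw: "opmul C Pw Y = opmul C Y Pw"
    unfolding PwP TwY[symmetric] by (rule H.Tw_commP)
  have cW: "\<forall>w'\<in>W. opmul C (Pv w') Y = opmul C Y (Pv w')"
  proof
    fix w' assume w': "w' \<in> W"
    have ww: "w' \<noteq> w" using w' insert.hyps(2) by blast
    have w'v: "w' \<in> verts \<Lambda>" using w' Wv by blast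
    have "\<forall>g\<in>carrier G. opmul C (Ag w g) (Pv w') = opmul C (Pv w') (Ag w g)"
      using Pv_Ag[OF wv w'v ww[symmetric]] by metis
    moreover have "opmul C Y' (Pv w') = opmul C (Pv w') Y'" using Y'(2) w' by metis
    ultimately show "opmul C (Pv w') Y = opmul C Y (Pv w')"
      using H.Tw_commB TwY by metis
  qed
  have "opmul C (opmul C (opmul C Pw Q) Y) (opmul C Pw Q) = opmul C (opmul C (opmul C Q Pw) Y) (opmul C Pw Q)"
    by (simp only: k1)
  also have "\<dots> = opmul C Q (opmul C (opmul C (opmul C Pw Y) Pw) Q)" by (simp only: opmul_assoc)
  also have "\<dots> = opmul C Q (opmul C (opmul C (opmul C Pw Y') Pw) Q)" by (simp only: k2)
  also have "\<dots> = opmul C (opmul C (opmul C Q Pw) Y') (opmul C Pw Q)" by (simp only: opmul_assoc)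
  also have "\<dots> = opmul C (opmul C (opmul C Pw Q) Y') (opmul C Q Pw)" by (simp only: k1)
  also have "\<dots> = opmul C Pw (opmul C (opmul C (opmul C Q Y') Q) Pw)" by (simp only: opmul_assoc)
  also have "\<dots> = opmul C Pw (opmul C (opmul C (opmul C Q X) Q) Pw)" by (simp only: k3 Q_def)
  also have "\<dots> = opmul C (opmul C (opmul C Pw Q) X) (opmul C Q Pw)" by (simp only: opmul_assoc)
  also have "\<dots> = opmul C (opmul C (opmul C Pw Q) X) (opmul C Pw Q)" by (simp only: k1)
  finally have main: "opmul C (opmul C (opmul C Pw Q) Y) (opmul C Pw Q) = opmul C (opmul C (opmul C Pw Q) X) (opmul C Pw Q)" .
  show ?case
  proof (intro bexI[OF _ YA] conjI)
    show "\<forall>w'\<in>insert w W. opmul C (Pv w') Y = opmul C Y (Pv w')" using cW cPw Pw_def by auto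
    show "opmul C (opmul C (opprod C Pv (insert w W)) Y) (opprod C Pv (insert w W)) =
      opmul C (opmul C (opprod C Pv (insert w W)) X) (opprod C Pv (insert w W))"
      unfolding e1 by (rule main)
  qed
qed

end


context gsetup begin

lemma final:
  "(let C = cfgs d (sites \<Lambda>);
          PiGI = Pi_set \<Lambda> G M d U L R (verts \<Lambda>);
          PiVr = Pi_set \<Lambda> G M d U L R (interior_verts \<Lambda> r);
          Ar = sub_alg d (sites \<Lambda>) r;
          hatAr = {opmul C (opmul C PiVr X) PiVr | X. X \<in> Ar}
      in {opmul C (opmul C PiGI X) PiGI | X. X \<in> Ar}
         = {opmul C Oh PiGI | Oh. Oh \<in> hatAr \<and> opmul C Oh PiGI = opmul C PiGI Oh})"
proof -
  define Vr where "Vr = interior_verts \<Lambda> r"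
  define Wr where "Wr = verts \<Lambda> - Vr"
  define Q where "Q = opprod C Pv Vr"
  define Rr where "Rr = opprod C Pv Wr"
  define P where "P = opprod C Pv (verts \<Lambda>)"
  have finV: "finite (verts \<Lambda>)"
  proof -
    interpret fin_digraph \<Lambda> by (rule graph)
    show ?thesis by simp
  qed
  have VrV: "Vr \<subseteq> verts \<Lambda>" unfolding Vr_def interior_verts_def by blast
  have WrV: "Wr \<subseteq> verts \<Lambda>" unfolding Wr_def by blast
  have fVr: "finite Vr" using finV VrV finite_subset by blast
  have fWr: "finite Wr" using finV WrV finite_subset by blast
  have cfV: "commfam C Pv Vr" by (rule commfam_mono[OF commfam_V VrV])
  have cfW: "commfam C Pv Wr" by (rule commfam_mono[OF commfam_V WrV])
  have un: "Vr \<union> Wr = verts \<Lambda>" using VrV unfolding Wr_def by blast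
  have PQR: "P = opmul C Q Rr"
    unfolding P_def Q_def Rr_def un[symmetric]
  proof (rule opprod_union[OF finC fWr fVr])
    show "Vr \<inter> Wr = {}" unfolding Wr_def by blast
    show "commfam C Pv (Vr \<union> Wr)" unfolding un by (rule commfam_V)
  qed
  have sQ: "supp C Q" unfolding Q_def by (rule opprod_supp[OF fVr cfV])
  have sR: "supp C Rr" unfolding Rr_def by (rule opprod_supp[OF fWr cfW])
  have QQ: "opmul C Q Q = Q" unfolding Q_def
    by (rule opprod_idem[OF finC fVr cfV]) (use VrV Pv_supp Pv_idem in auto)
  have RR: "opmul C Rr Rr = Rr" unfolding Rr_def
    by (rule opprod_idem[OF finC fWr cfW]) (use WrV Pv_supp Pv_idem in auto)
  have k: "opmul C Rr Q = opmul C Q Rr"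
  proof -
    have "\<forall>i\<in>Wr. opmul C Q (Pv i) = opmul C (Pv i) Q"
    proof
      fix i assume i: "i \<in> Wr"
      have iV: "i \<in> verts \<Lambda>" using i WrV by blast
      have "\<forall>j\<in>Vr. opmul C (Pv i) (Pv j) = opmul C (Pv j) (Pv i)"
      proof
        fix j assume "j \<in> Vr"
        then have jV: "j \<in> verts \<Lambda>" using VrV by blast
        show "opmul C (Pv i) (Pv j) = opmul C (Pv j) (Pv i)" by (rule Pv_comm[OF iV jV])
      qed
      from opprod_comm[OF finC Pv_supp[OF iV] fVr cfV this]
      show "opmul C Q (Pv i) = opmul C (Pv i) Q" unfolding Q_def by (rule sym)
    qed
    from opprod_comm[OF finC sQ fWr cfW this]
    show ?thesis unfolding Rr_def by (rule sym)
  qed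
  have PP: "opmul C P P = P"
  proof -
    have "opmul C P P = opmul C Q (opmul C (opmul C Rr Q) Rr)" unfolding PQR by (simp only: opmul_assoc)
    also have "\<dots> = opmul C (opmul C Q Q) (opmul C Rr Rr)" by (simp only: k opmul_assoc)
    also have "\<dots> = P" by (simp only: QQ RR PQR)
    finally show ?thesis .
  qed
  have PQ: "opmul C P Q = P"
  proof -
    have "opmul C P Q = opmul C Q (opmul C Rr Q)" unfolding PQR by (simp only: opmul_assoc)
    also have "\<dots> = opmul C (opmul C Q Q) Rr" by (simp only: k opmul_assoc)
    finally show ?thesis by (simp only: QQ PQR)
  qed
  have QP: "opmul C Q P = P"
  proof -
    have "opmul C Q P = opmul C (opmul C Q Q) Rr" unfolding PQR by (simp only: opmul_assoc)
    then show ?thesis by (simp only: QQ PQR)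
  qed
  have "{opmul C (opmul C P X) P | X. X \<in> Ar}
      = {opmul C Oh P | Oh. Oh \<in> {opmul C (opmul C Q X) Q | X. X \<in> Ar} \<and> opmul C Oh P = opmul C P Oh}"
  proof (rule equalityI; rule subsetI)
    fix Z assume "Z \<in> {opmul C (opmul C P X) P | X. X \<in> Ar}"
    then obtain X where X: "X \<in> Ar" and Z: "Z = opmul C (opmul C P X) P" by blast
    obtain Y where Y: "Y \<in> Ar" "\<forall>w\<in>Wr. opmul C (Pv w) Y = opmul C Y (Pv w)"
      and ind: "opmul C (opmul C Rr Y) Rr = opmul C (opmul C Rr X) Rr"
      using twirl_ind[OF X fWr WrV] unfolding Rr_def by blast
    have "\<forall>i\<in>Wr. opmul C Y (Pv i) = opmul C (Pv i) Y"
    proof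
      fix i assume "i \<in> Wr" then show "opmul C Y (Pv i) = opmul C (Pv i) Y" using Y(2) by simp
    qed
    from opprod_comm[OF finC Ar_supp[OF Y(1)] fWr cfW this]
    have yR: "opmul C Rr Y = opmul C Y Rr" unfolding Rr_def by (rule sym)
    define Oh where "Oh = opmul C (opmul C Q Y) Q"
    have b: "opmul C (opmul C P X) P = opmul C Oh P"
    proof -
      have "opmul C (opmul C P X) P = opmul C (opmul C (opmul C Q Rr) X) (opmul C Rr Q)"
        unfolding PQR by (simp only: k)
      also have "\<dots> = opmul C Q (opmul C (opmul C (opmul C Rr X) Rr) Q)" by (simp only: opmul_assoc)
      also have "\<dots> = opmul C Q (opmul C (opmul C (opmul C Y Rr) Rr) Q)" by (simp only: ind[symmetric] yR)
      also have "\<dots> = opmul C Q (opmul C Y (opmul C (opmul C Rr Rr) Q))" by (simp only: opmul_assoc)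
      also have "\<dots> = opmul C Q (opmul C Y (opmul C Q Rr))" by (simp only: RR k)
      also have "\<dots> = opmul C Q (opmul C Y (opmul C (opmul C Q Q) Rr))" by (simp only: QQ)
      also have "\<dots> = opmul C Oh P" unfolding Oh_def PQR by (simp only: opmul_assoc)
      finally show ?thesis .
    qed
    have a: "opmul C Oh P = opmul C P Oh"
    proof -
      have "opmul C Oh P = opmul C Q (opmul C Y (opmul C (opmul C Q Q) Rr))"
        unfolding Oh_def PQR by (simp only: opmul_assoc)
      also have "\<dots> = opmul C Q (opmul C Y (opmul C Q Rr))" by (simp only: QQ)
      finally have l: "opmul C Oh P = opmul C Q (opmul C Y (opmul C Q Rr))" .
      have "opmul C P Oh = opmul C (opmul C Q (opmul C Rr Q)) (opmul C Y Q)"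
        unfolding Oh_def PQR by (simp only: opmul_assoc)
      also have "\<dots> = opmul C (opmul C (opmul C Q Q) Rr) (opmul C Y Q)" by (simp only: k opmul_assoc)
      also have "\<dots> = opmul C Q (opmul C (opmul C Rr Y) Q)" by (simp only: QQ opmul_assoc)
      also have "\<dots> = opmul C Q (opmul C Y (opmul C Rr Q))" by (simp only: yR opmul_assoc)
      also have "\<dots> = opmul C Q (opmul C Y (opmul C Q Rr))" by (simp only: k)
      finally show ?thesis using l by simp
    qed
    have OhA: "Oh \<in> {opmul C (opmul C Q X) Q | X. X \<in> Ar}" unfolding Oh_def
      by (rule CollectI, rule exI[of _ Y]) (simp add: Y(1))
    show "Z \<in> {opmul C Oh P | Oh. Oh \<in> {opmul C (opmul C Q X) Q | X. X \<in> Ar} \<and> opmul C Oh P = opmul C P Oh}"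
      by (rule CollectI, rule exI[of _ Oh]) (simp only: Z b a OhA simp_thms)
  next
    fix Z assume "Z \<in> {opmul C Oh P | Oh. Oh \<in> {opmul C (opmul C Q X) Q | X. X \<in> Ar} \<and> opmul C Oh P = opmul C P Oh}"
    then obtain Oh where Z: "Z = opmul C Oh P" and OhA: "Oh \<in> {opmul C (opmul C Q X) Q | X. X \<in> Ar}"
      and c: "opmul C Oh P = opmul C P Oh" by (auto simp only: mem_Collect_eq)
    from OhA obtain X where X: "X \<in> Ar" and Oh: "Oh = opmul C (opmul C Q X) Q"
      by (auto simp only: mem_Collect_eq)
    have "opmul C Oh P = opmul C Oh (opmul C P P)" by (simp only: PP)
    also have "\<dots> = opmul C (opmul C P Oh) P" by (simp only: c[symmetric] opmul_assoc)
    also have "\<dots> = opmul C (opmul C (opmul C (opmul C P Q) X) Q) P" unfolding Oh by (simp only: opmul_assoc)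
    also have "\<dots> = opmul C (opmul C P X) (opmul C Q P)" by (simp only: PQ opmul_assoc)
    also have "\<dots> = opmul C (opmul C P X) P" by (simp only: QP)
    finally have "Z = opmul C (opmul C P X) P" using Z by simp
    then show "Z \<in> {opmul C (opmul C P X) P | X. X \<in> Ar}"
      using X by blast
  qed
  then show ?thesis unfolding Let_def P_def Q_def Vr_def Pi_set_def .
qed

end


theorem corollary4:
  fixes \<Lambda> :: "('v, 'e) pre_digraph" and G :: "('g, 'b) monoid_scheme" and M :: "'g measure"
    and d :: "'v + 'e \<Rightarrow> nat" and U :: "'v \<Rightarrow> 'g \<Rightarrow> cmat"
    and L R :: "'e \<Rightarrow> 'g \<Rightarrow> cmat" and r :: "('v + 'e) set"
  assumes graph: "fin_digraph \<Lambda>"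
    and grp: "group G"
    and haar_prob: "prob_space M" and haar_space: "space M = carrier G"
    and haar_left: "\<forall>g\<in>carrier G. (\<lambda>h. g \<otimes>\<^bsub>G\<^esub> h) \<in> M \<rightarrow>\<^sub>M M \<and> distr M M (\<lambda>h. g \<otimes>\<^bsub>G\<^esub> h) = M"
    and haar_right: "\<forall>g\<in>carrier G. (\<lambda>h. h \<otimes>\<^bsub>G\<^esub> g) \<in> M \<rightarrow>\<^sub>M M \<and> distr M M (\<lambda>h. h \<otimes>\<^bsub>G\<^esub> g) = M"
    and U_rep: "\<forall>v\<in>verts \<Lambda>. unitary_rep G (d (Inl v)) (U v)"
    and L_rep: "\<forall>e\<in>arcs \<Lambda>. unitary_rep G (d (Inr e)) (L e)"
    and R_rep: "\<forall>e\<in>arcs \<Lambda>. unitary_rep G (d (Inr e)) (\<lambda>g. R e (inv\<^bsub>G\<^esub> g))"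
    and LR_comm: "\<forall>e\<in>arcs \<Lambda>. \<forall>g\<in>carrier G. \<forall>h\<in>carrier G. \<forall>i<d (Inr e). \<forall>j<d (Inr e).
                    matmul (d (Inr e)) (L e g) (R e h) i j = matmul (d (Inr e)) (R e h) (L e g) i j"
    and U_meas: "\<forall>v\<in>verts \<Lambda>. \<forall>i j. (\<lambda>g. U v g i j) \<in> borel_measurable M"
    and L_meas: "\<forall>e\<in>arcs \<Lambda>. \<forall>i j. (\<lambda>g. L e g i j) \<in> borel_measurable M"
    and R_meas: "\<forall>e\<in>arcs \<Lambda>. \<forall>i j. (\<lambda>g. R e (inv\<^bsub>G\<^esub> g) i j) \<in> borel_measurable M"
    and region: "r \<subseteq> sites \<Lambda>"
  shows
    "(let C = cfgs d (sites \<Lambda>);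
          PiGI = Pi_set \<Lambda> G M d U L R (verts \<Lambda>);
          PiVr = Pi_set \<Lambda> G M d U L R (interior_verts \<Lambda> r);
          Ar = sub_alg d (sites \<Lambda>) r;
          hatAr = {opmul C (opmul C PiVr X) PiVr | X. X \<in> Ar}
      in {opmul C (opmul C PiGI X) PiGI | X. X \<in> Ar}
         = {opmul C Oh PiGI | Oh. Oh \<in> hatAr \<and> opmul C Oh PiGI = opmul C PiGI Oh})"
  proof -
  have "gsetup \<Lambda> G M d U L R r"
    unfolding gsetup_def using assms by (intro conjI) assumption+
  then show ?thesis by (rule gsetup.final)
qed

end
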